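(* Let $n\ge2$, let $X\subset\mathbb{R}^n$ be finite with the Euclidean metric $d$, let $k\in\mathbb{N}$, and fix an increasing sequence $0=\epsilon_0<\epsilon_1<\epsilon_2<\cdots$. Let $i\in\mathbb{N}$. For every $\alpha$ with $\epsilon_{i-1}<\alpha\le\epsilon_i$: (1) $E(H(i)_\alpha)\subset E(G(X,\rho^X)_\alpha)$; (2) if $(p,q)\in E(G(X,\rho^X)_\alpha)$, then there is a path in $H(i)_\alpha$ joining $p$ and $q$.
   Context: DBSCAN$^*$: for $Y\subset X$ and $\epsilon>0$, $\mathcal{C}(Y,\epsilon)=\{p\in Y:|\{y\in Y:d(p,y)\le\epsilon\}|>k\}$, $\mathcal{N}(Y,\epsilon)=Y\setminus\mathcal{C}(Y,\epsilon)$, and $\mathcal{D}^*(Y,\epsilon)$ is the set of vertex sets of the connected components of the graph with vertex set $\mathcal{C}(Y,\epsilon)$ and an edge between distinct $p,q$ whenever $d(p,q)\le\epsilon$. For $Z\subset X$ and $p\in Z$, $\operatorname{core}^Z_k(p)$ is the distance from $p$ to a $k$-th nearest neighbour of $p$ in $Z$ (the $k$-th smallest value of $d(p,z)$, $z\in Z\setminus\{p\}$, with multiplicity) and $\rho^Z(p,q)=\max\{\operatorname{core}^Z_k(p),\operatorname{core}^Z_k(q),d(p,q)\}$ for $p\ne q$, $\rho^Z(p,p)=0$. Cubes (for a given $\epsilon>0$): $\mathcal{Q}(\epsilon)$ is the collection of closed cubes $\{x\in\mathbb{R}^n: j_i\frac{\epsilon}{2\sqrt n}\le x_i\le (j_i+1)\frac{\epsilon}{2\sqrt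 n}\}$, $j\in\mathbb{Z}^n$; $S^m=\{x:\max_i|x_i-s_i|\le m\frac{\epsilon}{2\sqrt n}\text{ for some }s\in S\}$; $\mathcal{I}(B)=\{S\in\mathcal{Q}(\epsilon):S\cap B\ne\emptyset\}$. For $A\subset X$, $S\in\mathcal{I}(A)$ is an interior cube of $A$ if $S^1\cap X\subset A$ and every $T\in\mathcal{Q}(\epsilon)$ with $T\subset S^1$ lies in $\mathcal{I}(A)$, otherwise a boundary cube; $\partial A$ is the union of boundary cubes. For $Z\subset\mathbb{R}^n$, integer $N\ge0$: $Z^N=\bigcup_{S\in\mathcal{I}(Z)}S^N$, $Z^N_C=Z^N\cap C$. $\mathfrak{n},\mathfrak{m}$ are the smallest integers with $\mathfrak{n}\ge\sqrt n-1$, $\mathfrak{m}\ge2\sqrt n$; $\mathfrak{N}=\mathfrak{n}+\mathfrak{m}$. $F(Y,\epsilon)=\bigcup_{C\in\mathcal{D}^*(Y,\epsilon)}(\partial C)^{\mathfrak{N}}_C\cup\mathcal{N}(Y,\epsilon)$, cubes in $\mathcal{Q}(\epsilon)$. Graphs: $G(Z,w)$ is the complete weighted graph on finite $Z$ with weights $w(p,q)$; for a weighted graph $G$ and $\alpha\ge0$, $G_\alpha$ has the same vertices and only the edges of weight $\le\alpha$; $E(G)$ is the edge set. The union $G\cup H$ of weighted graphs has vertex set $V(G)\cup V(H)$, edge set $E(G)\cup E(H)$, and weight on a common edge the minimum of the two weights. Construction: $X_1=X$, $X_{i+1}=F(X_i,\epsilon_i)$ for $i\ge1$; $H(0)$ is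 the graph on $X_1$ with no edges; for $i\ge0$, $H(i+1)=\bigcup_{C\in\mathcal{D}^*(X_{i+1},\epsilon_{i+1})}G\big(B_{\epsilon_{i+1}}(C),\rho^{B_{\epsilon_{i+1}}(C)}\big)_{\epsilon_{i+1}}\cup H(i)$, where $B_{\epsilon_{i+1}}(C)=\{y\in X_{i+1}: d(y,C)\le\epsilon_{i+1}\}$. *)

theory Defs
  imports "HOL-Analysis.Analysis" "HOL-Library.Multiset"
begin

definition side :: "real \<Rightarrow> 'n::finite itself \<Rightarrow> real" where
  "side e _ = e / (2 * sqrt (real CARD('n)))"

definition cube :: "real \<Rightarrow> int^'n::finite \<Rightarrow> (real^'n) set" where
  "cube e j = {x. \<forall>i. real_of_int (j$i) * side e TYPE('n) \<le> x$i
                   \<and> x$i \<le> (real_of_int (j$i) + 1) * side e TYPE('n)}"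

definition cubes :: "real \<Rightarrow> (real^'n::finite) set set" where
  "cubes e = range (cube e)"

definition thicken :: "real \<Rightarrow> nat \<Rightarrow> (real^'n::finite) set \<Rightarrow> (real^'n) set" where
  "thicken e m S = {x. \<exists>s\<in>S. \<forall>i. \<bar>x$i - s$i\<bar> \<le> real m * side e TYPE('n)}"

definition meeting_cubes :: "real \<Rightarrow> (real^'n::finite) set \<Rightarrow> (real^'n) set set" where
  "meeting_cubes e B = {S \<in> cubes e. S \<inter> B \<noteq> {}}"

definition interior_cube ::
  "(real^'n::finite) set \<Rightarrow> real \<Rightarrow> (real^'n) set \<Rightarrow> (real^'n) set \<Rightarrow> bool" where
  "interior_cube X e A S \<longleftrightarrow> S \<in> meeting_cubes e A \<and> thicken e 1 S \<inter> X \<subseteq> A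
     \<and> (\<forall>T\<in>cubes e. T \<subseteq> thicken e 1 S \<longrightarrow> T \<in> meeting_cubes e A)"

definition boundary_cubes_union ::
  "(real^'n::finite) set \<Rightarrow> real \<Rightarrow> (real^'n) set \<Rightarrow> (real^'n) set" where
  "boundary_cubes_union X e A = \<Union>{S \<in> meeting_cubes e A. \<not> interior_cube X e A S}"

definition cube_nbhd :: "real \<Rightarrow> nat \<Rightarrow> (real^'n::finite) set \<Rightarrow> (real^'n) set" where
  "cube_nbhd e N Z = (\<Union>S\<in>meeting_cubes e Z. thicken e N S)"

definition frakn :: "'n::finite itself \<Rightarrow> nat" where
  "frakn _ = nat \<lceil>sqrt (real CARD('n)) - 1\<rceil>"

definition frakm :: "'n::finite itself \<Rightarrow> nat" where
  "frakm _ = nat \<lceil>2 * sqrt (real CARD('n))\<rceil>"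

definition frakN :: "'n::finite itself \<Rightarrow> nat" where
  "frakN t = frakn t + frakm t"

definition core_points :: "nat \<Rightarrow> ('a::metric_space) set \<Rightarrow> real \<Rightarrow> 'a set" where
  "core_points k Y e = {p \<in> Y. card {y \<in> Y. dist p y \<le> e} > k}"

definition noise_points :: "nat \<Rightarrow> ('a::metric_space) set \<Rightarrow> real \<Rightarrow> 'a set" where
  "noise_points k Y e = Y - core_points k Y e"

definition core_rel :: "nat \<Rightarrow> ('a::metric_space) set \<Rightarrow> real \<Rightarrow> ('a \<times> 'a) set" where
  "core_rel k Y e = {(p, q). p \<in> core_points k Y e \<and> q \<in> core_points k Y e \<and> p \<noteq> q \<and> dist p q \<le> e}"

definition dbscan_clusters :: "nat \<Rightarrow> ('a::metric_space) set \<Rightarrow> real \<Rightarrow> 'a set set" where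
  "dbscan_clusters k Y e =
     {C. \<exists>p \<in> core_points k Y e. C = {q \<in> core_points k Y e. (p, q) \<in> (core_rel k Y e)\<^sup>*}}"

definition Fset :: "(real^'n::finite) set \<Rightarrow> nat \<Rightarrow> (real^'n) set \<Rightarrow> real \<Rightarrow> (real^'n) set" where
  "Fset X k Y e =
     (\<Union>C\<in>dbscan_clusters k Y e. cube_nbhd e (frakN TYPE('n)) (boundary_cubes_union X e C) \<inter> C)
     \<union> noise_points k Y e"

text \<open>k-th smallest distance from p to points of Z - {p}, with multiplicity (k \<ge> 1).\<close>
definition core_dist :: "nat \<Rightarrow> ('a::metric_space) set \<Rightarrow> 'a \<Rightarrow> real" where
  "core_dist k Z p = sorted_list_of_multiset (image_mset (dist p) (mset_set (Z - {p}))) ! (k - 1)"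

definition rho :: "nat \<Rightarrow> ('a::metric_space) set \<Rightarrow> 'a \<Rightarrow> 'a \<Rightarrow> real" where
  "rho k Z p q = (if p = q then 0 else max (max (core_dist k Z p) (core_dist k Z q)) (dist p q))"

text \<open>A weighted graph: vertex set and a partial weight function on ordered pairs
  (an edge (p,q), p \<noteq> q, is present iff its weight is defined; edges are symmetric).\<close>
type_synonym 'a wgraph = "'a set \<times> ('a \<times> 'a \<Rightarrow> real option)"

definition edges :: "'a wgraph \<Rightarrow> ('a \<times> 'a) set" where
  "edges G = {e. snd G e \<noteq> None}"

definition complete_wgraph :: "'a set \<Rightarrow> ('a \<Rightarrow> 'a \<Rightarrow> real) \<Rightarrow> 'a wgraph" where
  "complete_wgraph Z w = (Z, \<lambda>(p, q). if p \<in> Z \<and> q \<in> Z \<and> p \<noteq> q then Some (w p q) else None)"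

definition threshold :: "'a wgraph \<Rightarrow> real \<Rightarrow> 'a wgraph" where
  "threshold G \<alpha> = (fst G, \<lambda>e. case snd G e of None \<Rightarrow> None
                                   | Some x \<Rightarrow> if x \<le> \<alpha> then Some x else None)"

definition gunion :: "'a wgraph \<Rightarrow> 'a wgraph \<Rightarrow> 'a wgraph" where
  "gunion G H = (fst G \<union> fst H, \<lambda>e. case (snd G e, snd H e) of
                    (None, b) \<Rightarrow> b
                  | (Some a, None) \<Rightarrow> Some a
                  | (Some a, Some b) \<Rightarrow> Some (min a b))"

definition gUnion :: "'a wgraph set \<Rightarrow> 'a wgraph" where
  "gUnion Gs = (\<Union>(fst ` Gs), \<lambda>e. if \<exists>G\<in>Gs. snd G e \<noteq> None
                                 then Some (Min {x. \<exists>G\<in>Gs. snd G e = Some x}) else None)"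

text \<open>Xseq X k eps m = X_(m+1):  X_1 = X,  X_(m+2) = F(X_(m+1), eps_(m+1)).\<close>
fun Xseq :: "(real^'n::finite) set \<Rightarrow> nat \<Rightarrow> (nat \<Rightarrow> real) \<Rightarrow> nat \<Rightarrow> (real^'n) set" where
  "Xseq X k eps 0 = X"
| "Xseq X k eps (Suc m) = Fset X k (Xseq X k eps m) (eps (Suc m))"

definition Bset :: "('a::metric_space) set \<Rightarrow> real \<Rightarrow> 'a set \<Rightarrow> 'a set" where
  "Bset Y e C = {y \<in> Y. infdist y C \<le> e}"

fun Hseq :: "(real^'n::finite) set \<Rightarrow> nat \<Rightarrow> (nat \<Rightarrow> real) \<Rightarrow> nat \<Rightarrow> (real^'n) wgraph" where
  "Hseq X k eps 0 = (X, \<lambda>_. None)"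
| "Hseq X k eps (Suc i) =
     gunion
       (gUnion ((\<lambda>C. threshold
                       (complete_wgraph (Bset (Xseq X k eps i) (eps (Suc i)) C)
                          (rho k (Bset (Xseq X k eps i) (eps (Suc i)) C)))
                       (eps (Suc i)))
                ` dbscan_clusters k (Xseq X k eps i) (eps (Suc i))))
       (Hseq X k eps i)"

end

theory Submission imports Defs begin

lemma sorted_nth_le_iff:
  fixes xs :: "real list"
  assumes "sorted xs" "i < length xs"
  shows "xs ! i \<le> b \<longleftrightarrow> i < length (filter (\<lambda>x. x \<le> b) xs)"
proof
  assume h: "xs ! i \<le> b"
  have "{0..i} \<subseteq> {l. l < length xs \<and> xs ! l \<le> b}"
  proof
    fix l assume "l \<in> {0..i}"
    then have "l \<le> i" by simp
    then have "xs ! l \<le> xs ! i" using assms sorted_nth_mono by blast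
    then show "l \<in> {l. l < length xs \<and> xs ! l \<le> b}" using h \<open>l \<le> i\<close> assms(2) by auto
  qed
  then have "card {0..i} \<le> card {l. l < length xs \<and> xs ! l \<le> b}"
    by (intro card_mono) auto
  then show "i < length (filter (\<lambda>x. x \<le> b) xs)"
    by (simp add: length_filter_conv_card)
next
  assume h: "i < length (filter (\<lambda>x. x \<le> b) xs)"
  show "xs ! i \<le> b"
  proof (rule ccontr)
    assume "\<not> xs ! i \<le> b"
    have "{l. l < length xs \<and> xs ! l \<le> b} \<subseteq> {0..<i}"
    proof
      fix l assume l: "l \<in> {l. l < length xs \<and> xs ! l \<le> b}"
      show "l \<in> {0..<i}"
      proof (rule ccontr)
        assume "l \<notin> {0..<i}"
        then have "i \<le> l" by simp
        then have "xs ! i \<le> xs ! l" using assms(1) l sorted_nth_mono by blast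
        then show False using l \<open>\<not> xs ! i \<le> b\<close> by auto
      qed
    qed
    then have "card {l. l < length xs \<and> xs ! l \<le> b} \<le> i"
      using card_mono[of "{0..<i}"] by fastforce
    then show False using h by (simp add: length_filter_conv_card)
  qed
qed

definition cnt :: "('a::metric_space) set \<Rightarrow> 'a \<Rightarrow> real \<Rightarrow> nat" where
  "cnt Z p b = card {z \<in> Z. z \<noteq> p \<and> dist p z \<le> b}"

lemma core_dist_le_iff:
  assumes "finite Z" "1 \<le> k" "k \<le> card (Z - {p})"
  shows "core_dist k Z p \<le> b \<longleftrightarrow> k \<le> cnt Z p b"
proof -
  let ?M = "image_mset (dist p) (mset_set (Z - {p}))"
  let ?xs = "sorted_list_of_multiset ?M"
  have len: "length ?xs = card (Z - {p})"
    by (metis mset_sorted_list_of_multiset size_image_mset size_mset size_mset_set)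
  have flen: "length (filter (\<lambda>x. x \<le> b) ?xs) = cnt Z p b"
  proof -
    have "length (filter (\<lambda>x. x \<le> b) ?xs) = size (filter_mset (\<lambda>x. x \<le> b) ?M)"
      by (metis mset_filter mset_sorted_list_of_multiset size_mset)
    also have "\<dots> = size (filter_mset (\<lambda>z. dist p z \<le> b) (mset_set (Z - {p})))"
      by (simp add: filter_mset_image_mset)
    also have "\<dots> = card {z \<in> Z - {p}. dist p z \<le> b}"
      using assms(1) by (simp add: filter_mset_mset_set)
    also have "\<dots> = cnt Z p b" unfolding cnt_def
      by (rule arg_cong[where f=card]) auto
    finally show ?thesis .
  qed
  have "core_dist k Z p = ?xs ! (k - 1)" by (simp add: core_dist_def)
  moreover have "k - 1 < length ?xs" using assms len by simp
  ultimately show ?thesis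
    using sorted_nth_le_iff[of ?xs "k - 1" b] flen assms(2) by auto
qed


lemma cnt_mono_set: "A \<subseteq> B \<Longrightarrow> finite B \<Longrightarrow> cnt A p b \<le> cnt B p b"
  unfolding cnt_def by (rule card_mono) auto

lemma cnt_mono_rad: "b \<le> b' \<Longrightarrow> finite Z \<Longrightarrow> cnt Z p b \<le> cnt Z p b'"
  unfolding cnt_def by (rule card_mono) auto

lemma card_ball_eq_cnt:
  assumes "finite Y" "p \<in> Y" and that: "0 \<le> e"
  shows "card {y \<in> Y. dist p y \<le> e} = Suc (cnt Y p e)"
proof -
  have "{y \<in> Y. dist p y \<le> e} = insert p {z \<in> Y. z \<noteq> p \<and> dist p z \<le> e}"
    using assms that by auto
  then show ?thesis using assms unfolding cnt_def by simp
qed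

lemma core_points_iff:
  assumes "finite Y" "0 \<le> e"
  shows "p \<in> core_points k Y e \<longleftrightarrow> p \<in> Y \<and> k \<le> cnt Y p e"
  using card_ball_eq_cnt[OF assms(1) _ assms(2)] unfolding core_points_def by auto

lemma Fset_subset: "Fset X k Y e \<subseteq> Y"
proof -
  have "\<And>C. C \<in> dbscan_clusters k Y e \<Longrightarrow> C \<subseteq> Y"
    unfolding dbscan_clusters_def core_points_def by auto
  moreover have "noise_points k Y e \<subseteq> Y" unfolding noise_points_def by auto
  ultimately show ?thesis unfolding Fset_def by blast
qed

lemma Xseq_Suc_subset: "Xseq X k eps (Suc m) \<subseteq> Xseq X k eps m"
  unfolding Xseq.simps by (rule Fset_subset)

lemma Xseq_antimono: "m \<le> m' \<Longrightarrow> Xseq X k eps m' \<subseteq> Xseq X k eps m"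
proof (induction m')
  case 0 then show ?case by simp
next
  case (Suc n)
  show ?case
  proof (cases "m = Suc n")
    case False
    then have "m \<le> n" using Suc.prems by simp
    then show ?thesis using Suc.IH Xseq_Suc_subset[of X k eps n] by blast
  qed simp
qed

lemma Xseq_subset: "Xseq X k eps m \<subseteq> X"
  using Xseq_antimono[of 0 m X k eps] by (simp only: Xseq.simps(1) le0)

lemma Xseq_finite: "finite X \<Longrightarrow> finite (Xseq X k eps m)"
  using Xseq_subset by (rule finite_subset)

lemma cluster_subset_core: "C \<in> dbscan_clusters k Y e \<Longrightarrow> C \<subseteq> core_points k Y e"
  unfolding dbscan_clusters_def by auto

lemma core_subset: "core_points k Y e \<subseteq> Y"
  unfolding core_points_def by auto

lemma core_rel_sym: "(a, b) \<in> core_rel k Y e \<Longrightarrow> (b, a) \<in> core_rel k Y e"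
  unfolding core_rel_def by (auto simp: dist_commute)

lemma core_rel_rtrancl_sym: "(b, a) \<in> (core_rel k Y e)\<^sup>*" if "(a, b) \<in> (core_rel k Y e)\<^sup>*"
proof -
  have "sym (core_rel k Y e)" by (intro symI) (rule core_rel_sym)
  then have "sym ((core_rel k Y e)\<^sup>*)" by (rule sym_rtrancl)
  then show ?thesis using that by (auto dest: symD)
qed

lemma cluster_conn:
  assumes "C \<in> dbscan_clusters k Y e" "a \<in> C" "b \<in> C"
  shows "(a, b) \<in> (core_rel k Y e)\<^sup>*"
proof -
  obtain p where "p \<in> core_points k Y e" "C = {q \<in> core_points k Y e. (p, q) \<in> (core_rel k Y e)\<^sup>*}"
    using assms(1) unfolding dbscan_clusters_def by auto
  then have "(p, a) \<in> (core_rel k Y e)\<^sup>*" "(p, b) \<in> (core_rel k Y e)\<^sup>*" using assms by auto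
  then show ?thesis using core_rel_rtrancl_sym rtrancl_trans by metis
qed

lemma cluster_of_core:
  assumes "p \<in> core_points k Y e"
  shows "{q \<in> core_points k Y e. (p, q) \<in> (core_rel k Y e)\<^sup>*} \<in> dbscan_clusters k Y e"
    and "p \<in> {q \<in> core_points k Y e. (p, q) \<in> (core_rel k Y e)\<^sup>*}"
  using assms unfolding dbscan_clusters_def by auto

lemma cluster_closed:
  assumes "C \<in> dbscan_clusters k Y e" "c \<in> C" "w \<in> core_points k Y e" "dist c w \<le> e"
  shows "w \<in> C"
proof -
  obtain p where p: "p \<in> core_points k Y e" "C = {q \<in> core_points k Y e. (p, q) \<in> (core_rel k Y e)\<^sup>*}"
    using assms(1) unfolding dbscan_clusters_def by auto
  have "(p, c) \<in> (core_rel k Y e)\<^sup>*" using p assms by auto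
  moreover have "(c, w) \<in> (core_rel k Y e)\<^sup>*"
  proof (cases "c = w")
    case False
    have "c \<in> core_points k Y e" using assms p by auto
    then have "(c, w) \<in> core_rel k Y e" using False assms unfolding core_rel_def by auto
    then show ?thesis by auto
  qed simp
  ultimately have "(p, w) \<in> (core_rel k Y e)\<^sup>*" by (rule rtrancl_trans)
  then show ?thesis using p assms(3) by blast
qed

lemma cluster_nonempty: "C \<in> dbscan_clusters k Y e \<Longrightarrow> C \<noteq> {}"
  unfolding dbscan_clusters_def by auto

lemma clusters_finite: "finite Y \<Longrightarrow> finite (dbscan_clusters k Y e)"
proof -
  assume "finite Y"
  have "dbscan_clusters k Y e \<subseteq> Pow Y"
    using cluster_subset_core core_subset by blast
  then show ?thesis using \<open>finite Y\<close> finite_subset by blast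
qed

lemma not_in_Fset:
  fixes X :: "(real^'n::finite) set"
  assumes "x \<in> Y" "x \<notin> Fset X k Y e"
  shows "\<exists>C \<in> dbscan_clusters k Y e. x \<in> C \<and>
           x \<notin> cube_nbhd e (frakN TYPE('n)) (boundary_cubes_union X e C)"
    and "x \<in> core_points k Y e"
proof -
  show xc: "x \<in> core_points k Y e"
    using assms unfolding Fset_def noise_points_def by auto
  show "\<exists>C \<in> dbscan_clusters k Y e. x \<in> C \<and>
           x \<notin> cube_nbhd e (frakN TYPE('n)) (boundary_cubes_union X e C)"
  proof (intro bexI conjI)
    let ?C = "{q \<in> core_points k Y e. (x, q) \<in> (core_rel k Y e)\<^sup>*}"
    show "?C \<in> dbscan_clusters k Y e" "x \<in> ?C" using cluster_of_core[OF xc] by auto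
    show "x \<notin> cube_nbhd e (frakN TYPE('n)) (boundary_cubes_union X e ?C)"
    proof
      assume "x \<in> cube_nbhd e (frakN TYPE('n)) (boundary_cubes_union X e ?C)"
      then have "x \<in> cube_nbhd e (frakN TYPE('n)) (boundary_cubes_union X e ?C) \<inter> ?C"
        using \<open>x \<in> ?C\<close> by blast
      then have "x \<in> Fset X k Y e" unfolding Fset_def using \<open>?C \<in> dbscan_clusters k Y e\<close>
        by (intro UnI1 UN_I) 
      then show False using assms(2) by contradiction
    qed
  qed
qed

lemma noise_in_Fset: "x \<in> Y \<Longrightarrow> x \<notin> core_points k Y e \<Longrightarrow> x \<in> Fset X k Y e"
  unfolding Fset_def noise_points_def by auto

lemma nbhd_in_Fset:
  "C \<in> dbscan_clusters k Y e \<Longrightarrow> x \<in> C \<Longrightarrow> x \<in> cube_nbhd e (frakN TYPE('n)) (boundary_cubes_union X e C)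
   \<Longrightarrow> x \<in> Fset X k Y (e::real)"
  for X :: "(real^'n::finite) set"
  unfolding Fset_def by (intro UnI1 UN_I) auto


section \<open>Geometry\<close>

lemma dist_vec_sq: "(dist x y)\<^sup>2 = (\<Sum>i\<in>UNIV. (x$i - y$i)\<^sup>2)" for x y :: "real^'n::finite"
  unfolding dist_vec_def L2_set_def by (simp add: sum_nonneg dist_real_def)

lemma comp_le_dist: "\<bar>x$i - y$i\<bar> \<le> dist x y" for x y :: "real^'n::finite"
  using dist_vec_nth_le[of x i y] by (simp add: dist_real_def)

lemma dist_le_box:
  fixes x y :: "real^'n::finite"
  assumes "\<And>i. \<bar>x$i - y$i\<bar> \<le> a"
  shows "dist x y \<le> sqrt (real CARD('n)) * a"
proof -
  have a: "0 \<le> a" using assms[of undefined] by linarith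
  have "(dist x y)\<^sup>2 \<le> (\<Sum>i\<in>(UNIV::'n set). a\<^sup>2)"
    unfolding dist_vec_sq
  proof (rule sum_mono)
    fix i show "(x$i - y$i)\<^sup>2 \<le> a\<^sup>2"
      using assms[of i] by (metis abs_le_square_iff abs_of_nonneg a)
  qed
  also have "\<dots> = (sqrt (real CARD('n)) * a)\<^sup>2" by (simp add: power_mult_distrib)
  finally show ?thesis using a by (meson power2_le_imp_le mult_nonneg_nonneg real_sqrt_ge_zero of_nat_0_le_iff)
qed

lemma side_pos: "0 < e \<Longrightarrow> 0 < side e TYPE('n::finite)"
  unfolding side_def by simp

lemma side_sqrt: "sqrt (real CARD('n)) * side e TYPE('n::finite) = e / 2"
  unfolding side_def by simp

lemma mem_cube: "x \<in> cube e j \<longleftrightarrow> (\<forall>i. real_of_int (j$i) * side e TYPE('n) \<le> x$i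
                   \<and> x$i \<le> (real_of_int (j$i) + 1) * side e TYPE('n))"
  for x :: "real^'n::finite"
  unfolding cube_def by simp

lemma clamp_bound:
  fixes a b x d :: real
  assumes "a - d \<le> x" "x \<le> b + d" "a \<le> b" "0 \<le> d"
  shows "\<bar>x - max a (min b x)\<bar> \<le> d"
  using assms by (auto simp: max_def min_def abs_le_iff)

lemma mem_thicken_cube:
  fixes x :: "real^'n::finite"
  assumes "0 \<le> side e TYPE('n)"
  shows "x \<in> thicken e m (cube e j) \<longleftrightarrow> (\<forall>i. (real_of_int (j$i) - real m) * side e TYPE('n) \<le> x$i
                   \<and> x$i \<le> (real_of_int (j$i) + 1 + real m) * side e TYPE('n))"
proof
  let ?s = "side e TYPE('n)"
  assume "x \<in> thicken e m (cube e j)"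
  then obtain y where y: "y \<in> cube e j" "\<And>i. \<bar>x$i - y$i\<bar> \<le> real m * ?s"
    unfolding thicken_def by auto
  show "\<forall>i. (real_of_int (j$i) - real m) * ?s \<le> x$i \<and> x$i \<le> (real_of_int (j$i) + 1 + real m) * ?s"
  proof
    fix i
    have "real_of_int (j$i) * ?s \<le> y$i" "y$i \<le> (real_of_int (j$i) + 1) * ?s"
      using y(1) unfolding mem_cube by auto
    then show "(real_of_int (j$i) - real m) * ?s \<le> x$i \<and> x$i \<le> (real_of_int (j$i) + 1 + real m) * ?s"
      using y(2)[of i] by (auto simp: algebra_simps abs_le_iff)
  qed
next
  let ?s = "side e TYPE('n)"
  assume h: "\<forall>i. (real_of_int (j$i) - real m) * ?s \<le> x$i \<and> x$i \<le> (real_of_int (j$i) + 1 + real m) * ?s"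
  define y where "y = (\<chi> i. max (real_of_int (j$i) * ?s) (min ((real_of_int (j$i) + 1) * ?s) (x$i)))"
  have "y \<in> cube e j" unfolding mem_cube y_def using assms by (auto simp: algebra_simps)
  moreover have "\<bar>x$i - y$i\<bar> \<le> real m * ?s" for i
  proof -
    have "y$i = max (real_of_int (j$i) * ?s) (min ((real_of_int (j$i) + 1) * ?s) (x$i))"
      unfolding y_def by simp
    moreover have "real_of_int (j$i) * ?s - real m * ?s \<le> x$i" 
      "x$i \<le> (real_of_int (j$i) + 1) * ?s + real m * ?s"
      "real_of_int (j$i) * ?s \<le> (real_of_int (j$i) + 1) * ?s"
      using h[rule_format, of i] assms by (auto simp: algebra_simps)
    moreover have "0 \<le> real m * ?s" using assms by simp
    ultimately show ?thesis using clamp_bound by simp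
  qed
  ultimately show "x \<in> thicken e m (cube e j)" unfolding thicken_def by auto
qed

definition fidx :: "real \<Rightarrow> real^'n::finite \<Rightarrow> int^'n" where
  "fidx e x = (\<chi> i. \<lfloor>x$i / side e TYPE('n)\<rfloor>)"

lemma in_fidx_cube: "0 < e \<Longrightarrow> x \<in> cube e (fidx e x)" for x :: "real^'n::finite"
proof -
  assume "0 < e"
  then have s: "0 < side e TYPE('n)" by (rule side_pos)
  show ?thesis unfolding mem_cube fidx_def
  proof
    fix i
    let ?s = "side e TYPE('n)"
    have a: "real_of_int \<lfloor>x$i / ?s\<rfloor> \<le> x$i / ?s" and b: "x$i / ?s < real_of_int \<lfloor>x$i / ?s\<rfloor> + 1"
      by linarith+
    have "real_of_int \<lfloor>x$i / ?s\<rfloor> * ?s \<le> x$i" using a s by (metis pos_le_divide_eq)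
    moreover have "x$i \<le> (real_of_int \<lfloor>x$i / ?s\<rfloor> + 1) * ?s" using b s
      by (metis pos_divide_less_eq less_imp_le)
    ultimately
    show "real_of_int ((\<chi> i. \<lfloor>x$i / ?s\<rfloor>) $ i) * ?s \<le> x$i \<and>
               x$i \<le> (real_of_int ((\<chi> i. \<lfloor>x$i / ?s\<rfloor>) $ i) + 1) * ?s"
      by simp
  qed
qed

lemma cube_in_cubes: "cube e j \<in> cubes e"
  unfolding cubes_def by simp

lemma cubes_E: "T \<in> cubes e \<Longrightarrow> (\<And>j. T = cube e j \<Longrightarrow> P) \<Longrightarrow> P"
  unfolding cubes_def by auto

lemma cube_ne: "0 < e \<Longrightarrow> cube e j \<noteq> {}" for j :: "int^'n::finite"
proof -
  assume "0 < e"
  then have s: "0 < side e TYPE('n)" by (rule side_pos)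
  have "(\<chi> i. real_of_int (j$i) * side e TYPE('n)) \<in> cube e j"
    unfolding mem_cube using s by (simp add: algebra_simps)
  then show ?thesis by blast
qed

lemma same_cube_dist:
  fixes x y :: "real^'n::finite"
  assumes "0 < e" "x \<in> cube e j" "y \<in> cube e j"
  shows "dist x y \<le> e / 2" and "\<And>i. \<bar>x$i - y$i\<bar> \<le> side e TYPE('n)"
proof -
  show c: "\<bar>x$i - y$i\<bar> \<le> side e TYPE('n)" for i
  proof -
    have "real_of_int (j$i) * side e TYPE('n) \<le> x$i" "x$i \<le> real_of_int (j$i) * side e TYPE('n) + side e TYPE('n)"
         "real_of_int (j$i) * side e TYPE('n) \<le> y$i" "y$i \<le> real_of_int (j$i) * side e TYPE('n) + side e TYPE('n)"
      using assms(2,3) unfolding mem_cube by (auto simp: distrib_right)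
    then show ?thesis by (simp add: abs_le_iff)
  qed
  show "dist x y \<le> e / 2" using dist_le_box[of x y, OF c] side_sqrt[of e, where 'n='n] by simp
qed


lemma frakN_ge: "3 * sqrt (real CARD('n)) - 1 \<le> real (frakN TYPE('n::finite))"
proof -
  have n1: "1 \<le> sqrt (real CARD('n))" by simp
  have "sqrt (real CARD('n)) - 1 \<le> real (frakn TYPE('n))"
    unfolding frakn_def using n1 by linarith
  moreover have "2 * sqrt (real CARD('n)) \<le> real (frakm TYPE('n))"
    unfolding frakm_def by linarith
  ultimately show ?thesis unfolding frakN_def by simp
qed

lemma frakN_ge1: "1 \<le> frakN TYPE('n::finite)"
proof -
  have "1 \<le> sqrt (real CARD('n))" by simp
  then have "2 \<le> real (frakN TYPE('n))" using frakN_ge[where 'n='n] by linarith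
  then show ?thesis by simp
qed

lemma N_side: "0 < e \<Longrightarrow> e \<le> real (frakN TYPE('n::finite)) * side e TYPE('n)"
proof -
  assume e: "0 < e"
  let ?r = "sqrt (real CARD('n))"
  have r1: "1 \<le> ?r" by simp
  have "2 * ?r \<le> real (frakN TYPE('n))" using frakN_ge[where 'n='n] r1 by linarith
  then have "2 * ?r * side e TYPE('n) \<le> real (frakN TYPE('n)) * side e TYPE('n)"
    using side_pos[OF e, where 'n='n] by (intro mult_right_mono) auto
  moreover have "2 * ?r * side e TYPE('n) = e" using side_sqrt[of e, where 'n='n] by simp
  ultimately show ?thesis by simp
qed

lemma N1_side: "0 < e \<Longrightarrow> e \<le> (real (frakN TYPE('n::finite)) + 1) * side e TYPE('n) - sqrt (real CARD('n)) * side e TYPE('n)"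
proof -
  assume e: "0 < e"
  let ?r = "sqrt (real CARD('n))"
  have "3 * ?r \<le> real (frakN TYPE('n)) + 1" using frakN_ge[where 'n='n] by linarith
  then have "3 * ?r * side e TYPE('n) \<le> (real (frakN TYPE('n)) + 1) * side e TYPE('n)"
    using side_pos[OF e, where 'n='n] by (intro mult_right_mono) auto
  moreover have "?r * side e TYPE('n) = e / 2" using side_sqrt[of e, where 'n='n] by simp
  ultimately show ?thesis by (simp add: algebra_simps)
qed

lemma cube_sub_thicken1:
  fixes j j' :: "int^'n::finite"
  assumes "0 < e" "\<And>i. \<bar>j$i - j'$i\<bar> \<le> 1"
  shows "cube e j \<subseteq> thicken e 1 (cube e j')"
proof
  fix y :: "real^'n" assume y: "y \<in> cube e j"
  let ?s = "side e TYPE('n)"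
  have s: "0 < ?s" using side_pos[OF assms(1)] .
  show "y \<in> thicken e 1 (cube e j')"
    unfolding mem_thicken_cube[OF less_imp_le[OF s]]
  proof
    fix i
    have a: "real_of_int (j$i) * ?s \<le> y$i" "y$i \<le> (real_of_int (j$i) + 1) * ?s"
      using y unfolding mem_cube by auto
    have b: "real_of_int (j'$i) - 1 \<le> real_of_int (j$i)" "real_of_int (j$i) \<le> real_of_int (j'$i) + 1"
      using assms(2)[of i] by (auto simp: abs_le_iff)
    have "(real_of_int (j'$i) - 1) * ?s \<le> real_of_int (j$i) * ?s"
      using b s by (intro mult_right_mono) auto
    moreover have "(real_of_int (j$i) + 1) * ?s \<le> (real_of_int (j'$i) + 1 + 1) * ?s"
      using b s by (intro mult_right_mono) auto
    ultimately show "(real_of_int (j'$i) - real 1) * ?s \<le> y$i \<and> y$i \<le> (real_of_int (j'$i) + 1 + real 1) * ?s"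
      using a by simp
  qed
qed

lemma unit_scale:
  fixes s :: real
  assumes "0 < s" "a \<le> b"
  shows "a * s \<le> b * s"
  using assms by (simp add: mult_right_mono)

lemma clamp1:
  fixes a :: int and X Y :: real and M :: nat
  assumes "real_of_int a \<le> X" "X \<le> real_of_int a + 1" "\<bar>Y - X\<bar> \<le> real M + 1"
  defines "c \<equiv> a + max (- int M) (min (int M) (\<lfloor>Y\<rfloor> - a))"
  shows "real_of_int c - 1 \<le> Y" "Y \<le> real_of_int c + 2" "\<bar>c - a\<bar> \<le> int M"
proof -
  have f: "real_of_int \<lfloor>Y\<rfloor> \<le> Y" "Y < real_of_int \<lfloor>Y\<rfloor> + 1" by linarith+
  have g: "Y - X \<le> real M + 1" "X - Y \<le> real M + 1" using assms(3) by (auto simp: abs_le_iff)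
  show "\<bar>c - a\<bar> \<le> int M" unfolding c_def by auto
  consider "\<lfloor>Y\<rfloor> - a < - int M" | "\<lfloor>Y\<rfloor> - a > int M" | "- int M \<le> \<lfloor>Y\<rfloor> - a \<and> \<lfloor>Y\<rfloor> - a \<le> int M" by linarith
  then have "real_of_int c - 1 \<le> Y \<and> Y \<le> real_of_int c + 2"
  proof cases
    case 1
    then have "c = a - int M" unfolding c_def by auto
    then have "real_of_int c = real_of_int a - real M" by simp
    moreover have "real_of_int \<lfloor>Y\<rfloor> + 1 \<le> real_of_int a - real M"
      using 1 by linarith
    ultimately show ?thesis using f g assms(1,2) by linarith
  next
    case 2
    then have "c = a + int M" unfolding c_def by auto
    then have "real_of_int c = real_of_int a + real M" by simp
    moreover have "real_of_int \<lfloor>Y\<rfloor> \<ge> real_of_int a + real M + 1"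
      using 2 by linarith
    ultimately show ?thesis using f g assms(1,2) by linarith
  next
    case 3
    then have "c = \<lfloor>Y\<rfloor>" unfolding c_def by auto
    then show ?thesis using f by linarith
  qed
  then show "real_of_int c - 1 \<le> Y" "Y \<le> real_of_int c + 2" by auto
qed

lemma clamp2:
  fixes a :: int and X Y :: real and M :: nat
  assumes "real_of_int a \<le> X" "X \<le> real_of_int a + 1" "\<bar>Y - X\<bar> \<le> real M + 1"
  defines "c \<equiv> a + max (- int M - 1) (min (int M + 1) (\<lfloor>Y\<rfloor> - a))"
  shows "real_of_int c \<le> Y" "Y \<le> real_of_int c + 1" "\<bar>c - a\<bar> \<le> int M + 1"
proof -
  have f: "real_of_int \<lfloor>Y\<rfloor> \<le> Y" "Y < real_of_int \<lfloor>Y\<rfloor> + 1" by linarith+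
  have g: "Y - X \<le> real M + 1" "X - Y \<le> real M + 1" using assms(3) by (auto simp: abs_le_iff)
  show "\<bar>c - a\<bar> \<le> int M + 1" unfolding c_def by auto
  consider "\<lfloor>Y\<rfloor> - a < - int M - 1" | "\<lfloor>Y\<rfloor> - a > int M + 1" | "- int M - 1 \<le> \<lfloor>Y\<rfloor> - a \<and> \<lfloor>Y\<rfloor> - a \<le> int M + 1" by linarith
  then have "real_of_int c \<le> Y \<and> Y \<le> real_of_int c + 1"
  proof cases
    case 1
    then have "real_of_int \<lfloor>Y\<rfloor> + 1 \<le> real_of_int a - real M - 1"
      by linarith
    then show ?thesis using f g assms(1,2) by linarith
  next
    case 2
    then have "real_of_int \<lfloor>Y\<rfloor> \<ge> real_of_int a + real M + 2"
      by linarith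
    moreover have "c = a + int M + 1" unfolding c_def using 2 by auto
    then have "real_of_int c = real_of_int a + real M + 1" by simp
    ultimately show ?thesis using f g assms(1,2) by linarith
  next
    case 3
    then have "c = \<lfloor>Y\<rfloor>" unfolding c_def by auto
    then show ?thesis using f by linarith
  qed
  then show "real_of_int c \<le> Y" "Y \<le> real_of_int c + 1" by auto
qed


section \<open>Deep points\<close>

definition deep :: "(real^'n::finite) set \<Rightarrow> real \<Rightarrow> (real^'n) set \<Rightarrow> real^'n \<Rightarrow> bool" where
  "deep X e C x \<longleftrightarrow> x \<in> C \<and> x \<notin> cube_nbhd e (frakN TYPE('n)) (boundary_cubes_union X e C)"

lemma boundary_meet:
  fixes X :: "(real^'n::finite) set"
  assumes "T \<in> cubes e" "T \<inter> C \<noteq> {}" "\<not> interior_cube X e C T" "T' \<in> cubes e" "T' \<inter> T \<noteq> {}"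
  shows "T' \<in> meeting_cubes e (boundary_cubes_union X e C)"
proof -
  have "T \<in> meeting_cubes e C" using assms(1,2) unfolding meeting_cubes_def by auto
  then have "T \<subseteq> boundary_cubes_union X e C"
    using assms(3) unfolding boundary_cubes_union_def by auto
  then show ?thesis using assms(4,5) unfolding meeting_cubes_def by auto
qed

lemma deep_not_thicken:
  fixes X :: "(real^'n::finite) set"
  assumes "deep X e C x" "T' \<in> meeting_cubes e (boundary_cubes_union X e C)"
  shows "x \<notin> thicken e (frakN TYPE('n)) T'"
  using assms unfolding deep_def cube_nbhd_def by auto

lemma DL0:
  fixes X :: "(real^'n::finite) set" and j j0 :: "int^'n"
  assumes "0 < e" "deep X e C x" "x \<in> cube e j0" "cube e j \<inter> C \<noteq> {}"
    "\<And>i. \<bar>j$i - j0$i\<bar> \<le> int (frakN TYPE('n))"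
  shows "interior_cube X e C (cube e j)"
proof (rule ccontr)
  let ?s = "side e TYPE('n)" and ?N = "frakN TYPE('n)"
  have s: "0 < ?s" using side_pos[OF assms(1)] .
  assume ni: "\<not> interior_cube X e C (cube e j)"
  have "cube e j \<inter> cube e j \<noteq> {}" using cube_ne[OF assms(1)] by auto
  then have "cube e j \<in> meeting_cubes e (boundary_cubes_union X e C)"
    using boundary_meet[OF cube_in_cubes assms(4) ni cube_in_cubes] by blast
  then have nx: "x \<notin> thicken e ?N (cube e j)" by (rule deep_not_thicken[OF assms(2)])
  have "x \<in> thicken e ?N (cube e j)"
    unfolding mem_thicken_cube[OF less_imp_le[OF s]]
  proof
    fix i
    have a: "real_of_int (j0$i) * ?s \<le> x$i" "x$i \<le> (real_of_int (j0$i) + 1) * ?s"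
      using assms(3) unfolding mem_cube by auto
    have b: "real_of_int (j$i) - real ?N \<le> real_of_int (j0$i)" "real_of_int (j0$i) + 1 \<le> real_of_int (j$i) + 1 + real ?N"
      using assms(5)[of i] by (auto simp: abs_le_iff)
    show "(real_of_int (j$i) - real ?N) * ?s \<le> x$i \<and> x$i \<le> (real_of_int (j$i) + 1 + real ?N) * ?s"
      using unit_scale[OF s b(1)] unit_scale[OF s b(2)] a by linarith
  qed
  then show False using nx by contradiction
qed

lemma DL1:
  fixes X :: "(real^'n::finite) set" and j0 :: "int^'n"
  assumes "0 < e" "deep X e C x" "x \<in> cube e j0"
    and "\<And>i. \<bar>j$i - j0$i\<bar> \<le> int L" "L \<le> frakN TYPE('n) + 1"
  shows "cube e j \<inter> C \<noteq> {}"
proof -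
  have "\<forall>j. (\<forall>i. \<bar>j$i - j0$i\<bar> \<le> int L) \<longrightarrow> L \<le> frakN TYPE('n) + 1 \<longrightarrow> cube e j \<inter> C \<noteq> {}"
  proof (induction L)
    case 0
    show ?case
    proof (intro allI impI)
      fix j :: "int^'n" assume "\<forall>i. \<bar>j$i - j0$i\<bar> \<le> int 0"
      then have "j = j0" by (auto simp: vec_eq_iff)
      then show "cube e j \<inter> C \<noteq> {}" using assms(2,3) unfolding deep_def by auto
    qed
  next
    case (Suc L)
    show ?case
    proof (intro allI impI)
      fix j :: "int^'n"
      assume h1: "\<forall>i. \<bar>j$i - j0$i\<bar> \<le> int (Suc L)" and h2: "Suc L \<le> frakN TYPE('n) + 1"
      define j' where "j' = (\<chi> i. j0$i + max (- int L) (min (int L) (j$i - j0$i)))"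
      have j'1: "\<bar>j'$i - j0$i\<bar> \<le> int L" for i unfolding j'_def by auto
      have j'2: "\<bar>j$i - j'$i\<bar> \<le> 1" for i using h1[rule_format, of i] unfolding j'_def by auto
      have m: "cube e j' \<inter> C \<noteq> {}" using Suc.IH j'1 h2 by simp
      have "\<bar>j'$i - j0$i\<bar> \<le> int (frakN TYPE('n))" for i using j'1[of i] h2 by linarith
      then have "interior_cube X e C (cube e j')"
        using DL0[OF assms(1-3) m] by blast
      then have "cube e j \<in> meeting_cubes e C"
        using cube_sub_thicken1[OF assms(1) j'2] cube_in_cubes unfolding interior_cube_def by blast
      then show "cube e j \<inter> C \<noteq> {}" unfolding meeting_cubes_def by auto
    qed
  qed
  then show ?thesis using assms(4,5) by blast
qed

lemma deep_cube_interior: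
  fixes X :: "(real^'n::finite) set" and j0 :: "int^'n"
  assumes "0 < e" "deep X e C x" "x \<in> cube e j0" "\<And>i. \<bar>j$i - j0$i\<bar> \<le> int (frakN TYPE('n))"
  shows "interior_cube X e C (cube e j)"
  using DL0[OF assms(1-3) DL1[OF assms(1-3) assms(4)] assms(4)] by simp

lemma deep_a:
  fixes X :: "(real^'n::finite) set"
  assumes "0 < e" "deep X e C x" "y \<in> X"
    "\<And>i. \<bar>y$i - x$i\<bar> \<le> (real (frakN TYPE('n)) + 1) * side e TYPE('n)"
  shows "y \<in> C"
proof -
  let ?s = "side e TYPE('n)" and ?N = "frakN TYPE('n)"
  have s: "0 < ?s" using side_pos[OF assms(1)] .
  define j0 where "j0 = fidx e x"
  have x0: "x \<in> cube e j0" unfolding j0_def by (rule in_fidx_cube[OF assms(1)])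
  define j' where "j' = (\<chi> i. j0$i + max (- int ?N) (min (int ?N) (\<lfloor>y$i / ?s\<rfloor> - j0$i)))"
  have props: "real_of_int (j'$i) - 1 \<le> y$i / ?s \<and> y$i / ?s \<le> real_of_int (j'$i) + 2 \<and> \<bar>j'$i - j0$i\<bar> \<le> int ?N" for i
  proof -
    have a: "real_of_int (j0$i) \<le> x$i / ?s" "x$i / ?s \<le> real_of_int (j0$i) + 1"
      using x0 s unfolding mem_cube by (auto simp: pos_le_divide_eq pos_divide_le_eq)
    have "\<bar>y$i - x$i\<bar> / ?s \<le> real ?N + 1" using assms(4)[of i] s by (simp add: pos_divide_le_eq)
    then have b: "\<bar>y$i / ?s - x$i / ?s\<bar> \<le> real ?N + 1" using s by (simp add: diff_divide_distrib[symmetric])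
    show ?thesis using clamp1[OF a b] unfolding j'_def by simp
  qed
  have int: "interior_cube X e C (cube e j')"
    using deep_cube_interior[OF assms(1,2) x0] props by blast
  have "y \<in> thicken e 1 (cube e j')"
    unfolding mem_thicken_cube[OF less_imp_le[OF s]]
  proof
    fix i
    have "real_of_int (j'$i) - 1 \<le> y$i / ?s" "y$i / ?s \<le> real_of_int (j'$i) + 2" using props[of i] by auto
    then have "(real_of_int (j'$i) - 1) * ?s \<le> y$i" "y$i \<le> (real_of_int (j'$i) + 2) * ?s"
      using s by (simp_all add: pos_le_divide_eq pos_divide_le_eq)
    then show "(real_of_int (j'$i) - real 1) * ?s \<le> y$i \<and> y$i \<le> (real_of_int (j'$i) + 1 + real 1) * ?s"
      by (simp add: add.assoc)
  qed
  then show "y \<in> C" using int assms(3) unfolding interior_cube_def by blast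
qed

lemma deep_b:
  fixes X :: "(real^'n::finite) set"
  assumes "0 < e" "deep X e C x"
    "\<And>i. \<bar>z$i - x$i\<bar> \<le> (real (frakN TYPE('n)) + 1) * side e TYPE('n)"
  shows "\<exists>c\<in>C. \<forall>i. \<bar>c$i - z$i\<bar> \<le> side e TYPE('n)"
proof -
  let ?s = "side e TYPE('n)" and ?N = "frakN TYPE('n)"
  have s: "0 < ?s" using side_pos[OF assms(1)] .
  define j0 where "j0 = fidx e x"
  have x0: "x \<in> cube e j0" unfolding j0_def by (rule in_fidx_cube[OF assms(1)])
  define j' where "j' = (\<chi> i. j0$i + max (- int ?N - 1) (min (int ?N + 1) (\<lfloor>z$i / ?s\<rfloor> - j0$i)))"
  have props: "real_of_int (j'$i) \<le> z$i / ?s \<and> z$i / ?s \<le> real_of_int (j'$i) + 1 \<and> \<bar>j'$i - j0$i\<bar> \<le> int (Suc ?N)" for i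
  proof -
    have a: "real_of_int (j0$i) \<le> x$i / ?s" "x$i / ?s \<le> real_of_int (j0$i) + 1"
      using x0 s unfolding mem_cube by (auto simp: pos_le_divide_eq pos_divide_le_eq)
    have "\<bar>z$i - x$i\<bar> / ?s \<le> real ?N + 1" using assms(3)[of i] s by (simp add: pos_divide_le_eq)
    then have b: "\<bar>z$i / ?s - x$i / ?s\<bar> \<le> real ?N + 1" using s by (simp add: diff_divide_distrib[symmetric])
    show ?thesis using clamp2[OF a b] unfolding j'_def by simp
  qed
  have zc: "z \<in> cube e j'" unfolding mem_cube
  proof
    fix i
    have "real_of_int (j'$i) \<le> z$i / ?s" "z$i / ?s \<le> real_of_int (j'$i) + 1" using props[of i] by auto
    then show "real_of_int (j'$i) * ?s \<le> z$i \<and> z$i \<le> (real_of_int (j'$i) + 1) * ?s"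
      using s by (simp add: pos_le_divide_eq pos_divide_le_eq)
  qed
  have "cube e j' \<inter> C \<noteq> {}"
    using DL1[OF assms(1,2) x0, of j' "Suc ?N"] props by simp
  then obtain c where "c \<in> C" "c \<in> cube e j'" by auto
  then show ?thesis using same_cube_dist(2)[OF assms(1) _ zc] by auto
qed


section \<open>The strict walking lemma\<close>

lemma lemW:
  fixes r q :: "real^'n::finite"
  assumes n2: "2 \<le> CARD('n)" and R: "0 < R" and s: "0 < s" and far: "\<exists>i. R < \<bar>q$i - r$i\<bar>"
  shows "\<exists>z. (\<forall>i. \<bar>z$i - r$i\<bar> \<le> R) \<and>
             (\<forall>c. (\<forall>i. \<bar>c$i - z$i\<bar> \<le> s) \<longrightarrow> dist c q < dist r q - R + sqrt (real CARD('n)) * s)"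
proof -
  define D where "D = q - r"
  define M where "M = Max (range (\<lambda>i. \<bar>D$i\<bar>))"
  have fin: "finite (range (\<lambda>i. \<bar>D$i\<bar>))" by simp
  have Mge: "\<bar>D$i\<bar> \<le> M" for i unfolding M_def using fin by (intro Max_ge) auto
  have "M \<in> range (\<lambda>i. \<bar>D$i\<bar>)" unfolding M_def using fin by (intro Max_in) auto
  then obtain i0 where i0: "\<bar>D$i0\<bar> = M" by auto
  obtain i1 where "R < \<bar>q$i1 - r$i1\<bar>" using far by auto
  then have RM: "R < M" using Mge[of i1] unfolding D_def by simp
  then have M0: "0 < M" using R by simp
  define t where "t = R / M"
  have t01: "0 < t" "t < 1" unfolding t_def using R RM M0 by auto
  define z where "z = r + t *\<^sub>R D"
  have zr: "\<bar>z$i - r$i\<bar> \<le> R" for i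
  proof -
    have "\<bar>z$i - r$i\<bar> = t * \<bar>D$i\<bar>" unfolding z_def using t01 by (simp add: abs_mult)
    also have "\<dots> \<le> t * M" using Mge[of i] t01 by (intro mult_left_mono) auto
    also have "\<dots> = R" unfolding t_def using M0 by simp
    finally show ?thesis .
  qed
  have drq: "dist r q = norm D" unfolding D_def by (simp add: dist_norm norm_minus_commute)
  have qz: "q - z = (1 - t) *\<^sub>R D" unfolding z_def D_def by (simp add: algebra_simps)
  have dzq: "dist z q = (1 - t) * norm D" using t01 by (simp add: dist_norm norm_minus_commute qz)
  have normsq: "(norm D)\<^sup>2 = (\<Sum>i\<in>UNIV. (D$i)\<^sup>2)"
    using dist_vec_sq[of D 0] by (simp add: dist_norm)
  have sqn: "1 < sqrt (real CARD('n))" using n2 by simp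
  show ?thesis
  proof (intro exI conjI allI impI)
    show "\<bar>z$i - r$i\<bar> \<le> R" for i by (rule zr)
    fix c :: "real^'n" assume cz: "\<forall>i. \<bar>c$i - z$i\<bar> \<le> s"
    show "dist c q < dist r q - R + sqrt (real CARD('n)) * s"
    proof (cases "\<exists>l. l \<noteq> i0 \<and> D$l \<noteq> 0")
      case True
      then obtain l where l: "l \<noteq> i0" "D$l \<noteq> 0" by auto
      have "(\<Sum>i\<in>{i0, l}. (D$i)\<^sup>2) \<le> (\<Sum>i\<in>UNIV. (D$i)\<^sup>2)"
        by (rule sum_mono2) auto
      moreover have "(\<Sum>i\<in>{i0, l}. (D$i)\<^sup>2) = (D$i0)\<^sup>2 + (D$l)\<^sup>2"
        using l by simp
      moreover have "(D$i0)\<^sup>2 = M\<^sup>2" using i0 by (metis power2_abs)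
      moreover have "0 < (D$l)\<^sup>2" using l by simp
      ultimately have "M\<^sup>2 < (norm D)\<^sup>2" using normsq by linarith
      then have MD: "M < norm D" by (rule power_less_imp_less_base) simp
      have tri: "dist c q \<le> dist c z + dist z q" by (rule dist_triangle)
      have cz': "dist c z \<le> sqrt (real CARD('n)) * s" using dist_le_box[of c z s] cz by blast
      have "t * M < t * norm D" using MD t01 by simp
      then have "R < t * norm D" unfolding t_def using M0 by simp
      then show ?thesis using tri cz' dzq drq by (simp add: algebra_simps)
    next
      case False
      then have Dz: "\<And>l. l \<noteq> i0 \<Longrightarrow> D$l = 0" by auto
      have s1: "(\<Sum>i\<in>UNIV. (D$i)\<^sup>2) = (D$i0)\<^sup>2 + (\<Sum>i\<in>UNIV - {i0}. (D$i)\<^sup>2)"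
        by (simp add: sum.remove)
      have s2: "(\<Sum>i\<in>UNIV - {i0}. (D$i)\<^sup>2) = 0" using Dz by (intro sum.neutral) auto
      have s3: "(D$i0)\<^sup>2 = M\<^sup>2" using i0 by (metis power2_abs)
      have "(norm D)\<^sup>2 = M\<^sup>2" using normsq s1 s2 s3 by simp
      then have nD: "norm D = M" using M0 by (simp add: power2_eq_iff_nonneg)
      define lam where "lam = M - R"
      have lam0: "0 < lam" unfolding lam_def using RM by simp
      have qzl: "q$l = z$l" if "l \<noteq> i0" for l
      proof -
        have "(q - z)$l = (1 - t) * D$l" unfolding qz by simp
        then show ?thesis using Dz[OF that] by simp
      qed
      have qz0: "\<bar>q$i0 - z$i0\<bar> = lam"
      proof -
        have "(q - z)$i0 = (1 - t) * D$i0" unfolding qz by simp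
        then have "q$i0 - z$i0 = (1 - t) * D$i0" by simp
        then have "\<bar>q$i0 - z$i0\<bar> = (1 - t) * M" using t01 i0 by (simp add: abs_mult)
        also have "\<dots> = lam" unfolding lam_def t_def using M0 by (simp add: algebra_simps)
        finally show ?thesis .
      qed
      have e1: "(dist c q)\<^sup>2 = (c$i0 - q$i0)\<^sup>2 + (\<Sum>i\<in>UNIV - {i0}. (c$i - q$i)\<^sup>2)"
        unfolding dist_vec_sq by (simp add: sum.remove)
      have e2: "(\<Sum>i\<in>UNIV - {i0}. (c$i - q$i)\<^sup>2) = (\<Sum>i\<in>UNIV - {i0}. (c$i - z$i)\<^sup>2)"
        using qzl by (intro sum.cong) auto
      have e3: "(\<Sum>i\<in>UNIV - {i0}. (c$i - z$i)\<^sup>2) \<le> (\<Sum>i\<in>UNIV - {i0}. s\<^sup>2)"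
      proof (rule sum_mono)
        fix i have "\<bar>c$i - z$i\<bar> \<le> \<bar>s\<bar>" using cz s by simp
        then show "(c$i - z$i)\<^sup>2 \<le> s\<^sup>2" by (simp only: abs_le_square_iff)
      qed
      have e4: "(\<Sum>i\<in>UNIV - {i0}. s\<^sup>2) = (real CARD('n) - 1) * s\<^sup>2"
        by (simp add: card_Diff_subset of_nat_diff)
      have e5: "(c$i0 - q$i0)\<^sup>2 \<le> (s + lam)\<^sup>2"
      proof -
        have "\<bar>c$i0 - q$i0\<bar> \<le> \<bar>c$i0 - z$i0\<bar> + \<bar>q$i0 - z$i0\<bar>" by linarith
        moreover have "\<bar>c$i0 - z$i0\<bar> \<le> s" using cz by simp
        ultimately have "\<bar>c$i0 - q$i0\<bar> \<le> \<bar>s + lam\<bar>" using qz0 lam0 s by simp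
        then show ?thesis by (simp only: abs_le_square_iff)
      qed
      have sq: "(dist c q)\<^sup>2 \<le> (s + lam)\<^sup>2 + (real CARD('n) - 1) * s\<^sup>2"
        using e1 e2 e3 e4 e5 by linarith
      have f1: "(s + lam)\<^sup>2 + (real CARD('n) - 1) * s\<^sup>2 = lam\<^sup>2 + 2 * lam * s + real CARD('n) * s\<^sup>2"
        by (simp add: power2_eq_square algebra_simps)
      have f2: "2 * lam * s < 2 * lam * (sqrt (real CARD('n)) * s)"
        using lam0 s sqn by simp
      have f3: "(lam + sqrt (real CARD('n)) * s)\<^sup>2 = lam\<^sup>2 + 2 * lam * (sqrt (real CARD('n)) * s) + real CARD('n) * s\<^sup>2"
        by (simp add: power2_eq_square algebra_simps)
      define A where "A = (dist c q)\<^sup>2"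
      define B where "B = lam\<^sup>2 + 2 * lam * (sqrt (real CARD('n)) * s) + real CARD('n) * s\<^sup>2"
      have "A < B" using sq f1 f2 unfolding A_def B_def by linarith
      then have "(dist c q)\<^sup>2 < (lam + sqrt (real CARD('n)) * s)\<^sup>2" using f3 unfolding A_def B_def by simp
      moreover have "0 \<le> lam + sqrt (real CARD('n)) * s" using lam0 s by simp
      ultimately have "dist c q < lam + sqrt (real CARD('n)) * s"
        by (rule power_less_imp_less_base)
      then show ?thesis using drq nD unfolding lam_def by simp
    qed
  qed
qed


lemma deep_closer:
  fixes X :: "(real^'n::finite) set"
  assumes n2: "2 \<le> CARD('n)" and e: "0 < e" and dp: "deep X e C x" and y: "y \<in> X" "y \<notin> C"
  shows "\<exists>c\<in>C. dist c y < dist x y - e"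
proof -
  let ?s = "side e TYPE('n)" and ?N = "frakN TYPE('n)"
  let ?R = "(real ?N + 1) * ?s"
  have s: "0 < ?s" using side_pos[OF e] .
  have R: "0 < ?R" using s by simp
  have "\<not> (\<forall>i. \<bar>y$i - x$i\<bar> \<le> ?R)" using deep_a[OF e dp y(1)] y(2) by blast
  then have "\<exists>i. ?R < \<bar>y$i - x$i\<bar>" by (auto simp: not_le)
  from lemW[OF n2 R s this] obtain z where
    z1: "\<forall>i. \<bar>z$i - x$i\<bar> \<le> ?R" and
    z2: "\<forall>c. (\<forall>i. \<bar>c$i - z$i\<bar> \<le> ?s) \<longrightarrow> dist c y < dist x y - ?R + sqrt (real CARD('n)) * ?s"
    by blast
  obtain c where c: "c \<in> C" "\<forall>i. \<bar>c$i - z$i\<bar> \<le> ?s" using deep_b[OF e dp] z1 by blast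
  have "dist c y < dist x y - ?R + sqrt (real CARD('n)) * ?s" using z2 c(2) by blast
  moreover have "e \<le> ?R - sqrt (real CARD('n)) * ?s" using N1_side[OF e, where 'n='n] by simp
  ultimately show ?thesis using c(1) by (intro bexI[of _ c]) auto
qed

lemma discrete_switch:
  assumes "P 0" "\<not> P M"
  shows "\<exists>l<M. P l \<and> \<not> P (Suc l)"
  using assms
proof (induction M)
  case 0 then show ?case by simp
next
  case (Suc M)
  show ?case
  proof (cases "P M")
    case True
    have "M < Suc M" by simp
    then show ?thesis using True Suc.prems(2) by blast
  next
    case False
    then obtain l where l: "l < M" "P l" "\<not> P (Suc l)" using Suc.IH Suc.prems(1) by blast
    then have "l < Suc M" by simp
    then show ?thesis using l by blast
  qed
qed

lemma floor_close:
  fixes a b s :: real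
  assumes "0 < s" "\<bar>a - b\<bar> \<le> s"
  shows "\<bar>\<lfloor>a / s\<rfloor> - \<lfloor>b / s\<rfloor>\<bar> \<le> 1"
proof -
  define A where "A = a / s"
  define B where "B = b / s"
  have "A - B = (a - b) / s" unfolding A_def B_def by (simp add: diff_divide_distrib)
  then have "\<bar>A - B\<bar> = \<bar>a - b\<bar> / s" using assms(1) by simp
  then have AB: "\<bar>A - B\<bar> \<le> 1" using assms by (simp add: divide_le_eq)
  have fa: "real_of_int \<lfloor>A\<rfloor> \<le> A" "A < real_of_int \<lfloor>A\<rfloor> + 1" by linarith+
  have fb: "real_of_int \<lfloor>B\<rfloor> \<le> B" "B < real_of_int \<lfloor>B\<rfloor> + 1" by linarith+
  have ab: "A - B \<le> 1" "B - A \<le> 1" using AB by (auto simp: abs_le_iff)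
  have "real_of_int \<lfloor>A\<rfloor> < real_of_int \<lfloor>B\<rfloor> + 2" "real_of_int \<lfloor>B\<rfloor> < real_of_int \<lfloor>A\<rfloor> + 2"
    using fa fb ab by linarith+
  then have "\<lfloor>A\<rfloor> < \<lfloor>B\<rfloor> + 2" "\<lfloor>B\<rfloor> < \<lfloor>A\<rfloor> + 2" by linarith+
  then show ?thesis unfolding A_def B_def by auto
qed

lemma on_segment_dist:
  fixes x y :: "real^'n::finite"
  assumes "0 \<le> t" "t \<le> 1"
  shows "dist x (x + t *\<^sub>R (y - x)) = t * dist x y"
    and "dist y (x + t *\<^sub>R (y - x)) = (1 - t) * dist x y"
proof -
  show "dist x (x + t *\<^sub>R (y - x)) = t * dist x y"
    using assms by (simp add: dist_norm norm_minus_commute)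
  have "y - (x + t *\<^sub>R (y - x)) = (1 - t) *\<^sub>R (y - x)" by (simp add: algebra_simps)
  then show "dist y (x + t *\<^sub>R (y - x)) = (1 - t) * dist x y"
    using assms by (simp add: dist_norm norm_minus_commute)
qed

lemma walk:
  fixes X :: "(real^'n::finite) set"
  assumes n2: "2 \<le> CARD('n)" and e: "0 < e" and dp: "deep X e C x" and y: "y \<in> X" "y \<notin> C"
  shows "\<exists>c\<in>C. \<exists>j. c \<in> cube e j \<and> \<not> interior_cube X e C (cube e j) \<and> dist y c \<le> dist y x - e"
proof -
  let ?s = "side e TYPE('n)" and ?N = "frakN TYPE('n)"
  have s: "0 < ?s" using side_pos[OF e] .
  define d where "d = dist x y"
  define M where "M = Suc (nat \<lceil>d / ?s\<rceil>)"
  have M0: "0 < real M" unfolding M_def by simp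
  have dM: "d / real M \<le> ?s"
  proof -
    have "d / ?s \<le> real M" unfolding M_def by linarith
    then have "d \<le> real M * ?s" using s by (simp add: pos_divide_le_eq)
    then show ?thesis using M0 by (simp add: divide_le_eq mult.commute)
  qed
  define zz where "zz l = x + (real l / real M) *\<^sub>R (y - x)" for l
  define good where "good l \<longleftrightarrow> interior_cube X e C (cube e (fidx e (zz l)))" for l
  have g0: "good 0"
  proof -
    have "zz 0 = x" unfolding zz_def by simp
    then show ?thesis unfolding good_def
      using deep_cube_interior[OF e dp in_fidx_cube[OF e], of "fidx e x"] by simp
  qed
  have gM: "\<not> good M"
  proof
    assume "good M"
    have "zz M = y" unfolding zz_def using M0 by simp
    then have int: "interior_cube X e C (cube e (fidx e y))" using \<open>good M\<close> unfolding good_def by simp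
    have "y \<in> thicken e 1 (cube e (fidx e y))"
      using in_fidx_cube[OF e, of y] cube_sub_thicken1[OF e, of "fidx e y" "fidx e y"] by auto
    then have "y \<in> C" using int y(1) unfolding interior_cube_def by blast
    then show False using y(2) by contradiction
  qed
  obtain l where l: "l < M" "good l" "\<not> good (Suc l)"
    using discrete_switch[of good M] g0 gM by blast
  define z where "z = zz (Suc l)"
  define t where "t = real (Suc l) / real M"
  have t01: "0 \<le> t" "t \<le> 1" unfolding t_def using l(1) M0 by auto
  have zdef: "z = x + t *\<^sub>R (y - x)" unfolding z_def zz_def t_def by simp
  define j where "j = fidx e z"
  define j' where "j' = fidx e (zz l)"
  have zj: "z \<in> cube e j" unfolding j_def by (rule in_fidx_cube[OF e])
  have close: "\<bar>j$i - j'$i\<bar> \<le> 1" for i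
  proof -
    have "z$i - zz l $ i = (y$i - x$i) / real M"
      unfolding z_def zz_def using M0 by (simp add: field_simps)
    then have "\<bar>z$i - zz l $ i\<bar> = \<bar>y$i - x$i\<bar> / real M" using M0 by simp
    also have "\<dots> \<le> d / real M" unfolding d_def using M0 comp_le_dist[of y i x]
      by (simp add: divide_right_mono dist_commute)
    also have "\<dots> \<le> ?s" by (rule dM)
    finally show ?thesis unfolding j_def j'_def fidx_def using floor_close[OF s] by simp
  qed
  have intj': "interior_cube X e C (cube e j')" using l(2) unfolding good_def j'_def by simp
  have "cube e j \<in> meeting_cubes e C"
    using cube_sub_thicken1[OF e close] intj' cube_in_cubes unfolding interior_cube_def by blast
  then obtain c where c: "c \<in> C" "c \<in> cube e j" unfolding meeting_cubes_def by auto
  have nij: "\<not> interior_cube X e C (cube e j)" using l(3) unfolding good_def j_def z_def by simp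
  define jj where "jj = (\<chi> i. j$i + (if z$i \<le> x$i then 1 else -1))"
  define w where "w = (\<chi> i. if z$i \<le> x$i then (real_of_int (j$i) + 1) * ?s else real_of_int (j$i) * ?s)"
  have wj: "w \<in> cube e j" unfolding mem_cube w_def using s by auto
  have wjj: "w \<in> cube e jj" unfolding mem_cube w_def jj_def using s by (auto simp: algebra_simps)
  have "cube e jj \<in> meeting_cubes e (boundary_cubes_union X e C)"
    using boundary_meet[OF cube_in_cubes _ nij cube_in_cubes, of jj] c wj wjj by blast
  then have "x \<notin> thicken e ?N (cube e jj)" by (rule deep_not_thicken[OF dp])
  then obtain i where i: "\<not> ((real_of_int (jj$i) - real ?N) * ?s \<le> x$i \<and> x$i \<le> (real_of_int (jj$i) + 1 + real ?N) * ?s)"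
    unfolding mem_thicken_cube[OF less_imp_le[OF s]] by blast
  have zi: "real_of_int (j$i) * ?s \<le> z$i" "z$i \<le> (real_of_int (j$i) + 1) * ?s"
    using zj unfolding mem_cube by auto
  have N1: "1 \<le> real ?N" using frakN_ge1[where 'n='n] by simp
  have far: "(real ?N + 1) * ?s < \<bar>x$i - z$i\<bar>"
  proof (cases "z$i \<le> x$i")
    case True
    then have jj: "real_of_int (jj$i) = real_of_int (j$i) + 1" unfolding jj_def by simp
    have "(real_of_int (j$i) + 1 - real ?N) * ?s \<le> real_of_int (j$i) * ?s"
      using N1 s by (intro mult_right_mono) auto
    then have "x$i > (real_of_int (j$i) + 1 + 1 + real ?N) * ?s" using i jj zi True by auto
    moreover have "(real_of_int (j$i) + 1 + 1 + real ?N) * ?s = (real_of_int (j$i) + 1) * ?s + (real ?N + 1) * ?s"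
      by (simp add: algebra_simps)
    ultimately show ?thesis using zi True by linarith
  next
    case False
    then have jj: "real_of_int (jj$i) = real_of_int (j$i) - 1" unfolding jj_def by simp
    have "(real_of_int (j$i) + 1) * ?s \<le> (real_of_int (j$i) - 1 + 1 + real ?N) * ?s"
      using N1 s by (intro mult_right_mono) auto
    then have "x$i < (real_of_int (j$i) - 1 - real ?N) * ?s" using i jj zi False by auto
    moreover have "(real_of_int (j$i) - 1 - real ?N) * ?s = real_of_int (j$i) * ?s - (real ?N + 1) * ?s"
      by (simp add: algebra_simps)
    ultimately show ?thesis using zi False by linarith
  qed
  have dxz: "(real ?N + 1) * ?s < dist x z" using far comp_le_dist[of x i z] by linarith
  have sa: "dist x z = t * d" using on_segment_dist(1)[OF t01, of x y] unfolding zdef d_def .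
  have sb: "dist y z = (1 - t) * d" using on_segment_dist(2)[OF t01, of y x] unfolding zdef d_def .
  have "dist y z = d - dist x z" unfolding sa sb by (simp add: algebra_simps)
  moreover have "dist z c \<le> sqrt (real CARD('n)) * ?s"
    using same_cube_dist(1)[OF e zj c(2)] side_sqrt[of e, where 'n='n] by simp
  moreover have "dist y c \<le> dist y z + dist z c" by (rule dist_triangle)
  moreover have "e \<le> (real ?N + 1) * ?s - sqrt (real CARD('n)) * ?s" using N1_side[OF e, where 'n='n] by simp
  ultimately have "dist y c \<le> d - e" using dxz by linarith
  then show ?thesis using c nij unfolding d_def by (auto simp: dist_commute)
qed

lemma retained:
  fixes X :: "(real^'n::finite) set"
  assumes "finite Y" "0 < e" "C \<in> dbscan_clusters k Y e" "c \<in> C" "c \<in> cube e j"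
    "\<not> interior_cube X e C (cube e j)" "w \<in> Y" "dist c w \<le> e"
  shows "w \<in> Fset X k Y e"
proof (cases "w \<in> core_points k Y e")
  case False then show ?thesis using noise_in_Fset assms(7) by blast
next
  case True
  have wC: "w \<in> C" using cluster_closed[OF assms(3,4) True assms(8)] .
  have "cube e j \<in> meeting_cubes e (boundary_cubes_union X e C)"
    using boundary_meet[OF cube_in_cubes _ assms(6) cube_in_cubes, of j] assms(4,5) by blast
  moreover have "w \<in> thicken e (frakN TYPE('n)) (cube e j)"
    unfolding thicken_def
  proof (intro CollectI bexI[of _ c] allI)
    fix i
    have "\<bar>w$i - c$i\<bar> \<le> e" using comp_le_dist[of w i c] assms(8) by (simp add: dist_commute)
    then show "\<bar>w$i - c$i\<bar> \<le> real (frakN TYPE('n)) * side e TYPE('n)"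
      using N_side[OF assms(2), where 'n='n] by linarith
  qed (use assms(5) in auto)
  ultimately have "w \<in> cube_nbhd e (frakN TYPE('n)) (boundary_cubes_union X e C)"
    unfolding cube_nbhd_def by blast
  then show ?thesis using nbhd_in_Fset[OF assms(3) wC] by blast
qed


section \<open>Weighted graph facts\<close>

lemma edges_threshold: "e \<in> edges (threshold G a) \<longleftrightarrow> (\<exists>w. snd G e = Some w \<and> w \<le> a)"
  unfolding edges_def threshold_def by (auto split: option.splits)

lemma snd_threshold: "snd (threshold G a) e = (case snd G e of None \<Rightarrow> None | Some x \<Rightarrow> if x \<le> a then Some x else None)"
  unfolding threshold_def by simp

lemma snd_complete: "snd (complete_wgraph Z w) (p, q) = (if p \<in> Z \<and> q \<in> Z \<and> p \<noteq> q then Some (w p q) else None)"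
  unfolding complete_wgraph_def by simp

lemma gunion_SomeD: "snd (gunion G H) e = Some w \<Longrightarrow> snd G e = Some w \<or> snd H e = Some w"
  unfolding gunion_def by (auto split: option.splits if_splits simp: min_def)

lemma gunion_le1: "snd G e = Some x \<Longrightarrow> \<exists>w\<le>x. snd (gunion G H) e = Some w"
  unfolding gunion_def by (auto split: option.splits)

lemma gunion_le2: "snd H e = Some x \<Longrightarrow> \<exists>w\<le>x. snd (gunion G H) e = Some w"
  unfolding gunion_def by (auto split: option.splits)

lemma gUnion_SomeD:
  assumes "finite Gs" "snd (gUnion Gs) e = Some w"
  shows "\<exists>G\<in>Gs. snd G e = Some w"
proof -
  let ?S = "{x. \<exists>G\<in>Gs. snd G e = Some x}"
  have ex: "\<exists>G\<in>Gs. snd G e \<noteq> None" and w: "w = Min ?S"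
    using assms(2) unfolding gUnion_def by (auto split: if_splits)
  have "?S \<subseteq> (\<lambda>G. the (snd G e)) ` Gs" by force
  then have fin: "finite ?S" using assms(1) finite_subset by blast
  have "?S \<noteq> {}" using ex by auto
  then have "w \<in> ?S" using w Min_in[OF fin] by simp
  then show ?thesis by auto
qed

lemma gUnion_le:
  assumes "finite Gs" "G \<in> Gs" "snd G e = Some x"
  shows "\<exists>w\<le>x. snd (gUnion Gs) e = Some w"
proof -
  let ?S = "{x. \<exists>G\<in>Gs. snd G e = Some x}"
  have "?S \<subseteq> (\<lambda>G. the (snd G e)) ` Gs" by force
  then have fin: "finite ?S" using assms(1) finite_subset by blast
  have "x \<in> ?S" using assms by auto
  then have "Min ?S \<le> x" using fin by simp
  moreover have "snd (gUnion Gs) e = Some (Min ?S)" unfolding gUnion_def using assms(2,3) by auto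
  ultimately show ?thesis by blast
qed

lemma rho_sym: "rho k Z a b = rho k Z b a"
  unfolding rho_def by (auto simp: dist_commute max.commute max.left_commute)

lemma Hseq_sym: "snd (Hseq X k eps L) (a, b) = snd (Hseq X k eps L) (b, a)"
proof (induction L)
  case 0 then show ?case by simp
next
  case (Suc m)
  let ?Gs = "(\<lambda>C. threshold (complete_wgraph (Bset (Xseq X k eps m) (eps (Suc m)) C)
                       (rho k (Bset (Xseq X k eps m) (eps (Suc m)) C))) (eps (Suc m)))
                ` dbscan_clusters k (Xseq X k eps m) (eps (Suc m))"
  have g: "snd G (a, b) = snd G (b, a)" if "G \<in> ?Gs" for G
    using that by (auto simp: snd_threshold snd_complete rho_sym)
  have "snd (gUnion ?Gs) (a, b) = snd (gUnion ?Gs) (b, a)"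
    unfolding gUnion_def using g by simp
  note A = this
  note B = Suc.IH
  show ?case unfolding Hseq.simps gunion_def snd_conv A B by (rule refl)
qed

lemma edges_sym: "(a, b) \<in> edges (threshold (Hseq X k eps L) t) \<Longrightarrow> (b, a) \<in> edges (threshold (Hseq X k eps L) t)"
  unfolding edges_threshold using Hseq_sym by metis

lemma edges_rtrancl_sym:
  assumes "(a, b) \<in> (edges (threshold (Hseq X k eps L) t))\<^sup>*"
  shows "(b, a) \<in> (edges (threshold (Hseq X k eps L) t))\<^sup>*"
proof -
  have "sym (edges (threshold (Hseq X k eps L) t))" by (intro symI) (rule edges_sym)
  then have "sym ((edges (threshold (Hseq X k eps L) t))\<^sup>*)" by (rule sym_rtrancl)
  then show ?thesis using assms by (auto dest: symD)
qed

lemma Hseq_mono_step: "snd (Hseq X k eps L) e = Some w \<Longrightarrow> \<exists>w'\<le>w. snd (Hseq X k eps (Suc L)) e = Some w'"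
  by (simp only: Hseq.simps) (rule gunion_le2)

lemma Hseq_mono: "L \<le> L' \<Longrightarrow> snd (Hseq X k eps L) e = Some w \<Longrightarrow> \<exists>w'\<le>w. snd (Hseq X k eps L') e = Some w'"
proof (induction L' rule: dec_induct)
  case base then show ?case by auto
next
  case (step n)
  then obtain w' where "w' \<le> w" "snd (Hseq X k eps n) e = Some w'" by auto
  then show ?case using Hseq_mono_step[of X k eps n e w'] by (meson order_trans)
qed

lemma edges_mono: "L \<le> L' \<Longrightarrow> b \<le> a \<Longrightarrow> edges (threshold (Hseq X k eps L) b) \<subseteq> edges (threshold (Hseq X k eps L') a)"
proof
  fix e assume L: "L \<le> L'" "b \<le> a" and "e \<in> edges (threshold (Hseq X k eps L) b)"
  then obtain w where w: "snd (Hseq X k eps L) e = Some w" "w \<le> b" unfolding edges_threshold by auto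
  obtain w' where "w' \<le> w" "snd (Hseq X k eps L') e = Some w'" using Hseq_mono[OF L(1) w(1)] by auto
  then show "e \<in> edges (threshold (Hseq X k eps L') a)" unfolding edges_threshold using w(2) L(2) by auto
qed


lemma Bset_sub: "Bset Y e C \<subseteq> Y" unfolding Bset_def by auto

lemma Bset_nbr: "c \<in> C \<Longrightarrow> y \<in> Y \<Longrightarrow> dist c y \<le> e \<Longrightarrow> y \<in> Bset Y e C"
proof -
  assume a: "c \<in> C" "y \<in> Y" "dist c y \<le> e"
  have "infdist y C \<le> dist y c" by (rule infdist_le[OF a(1)])
  then have "infdist y C \<le> e" using a(3) by (simp add: dist_commute)
  then show ?thesis unfolding Bset_def using a(2) by simp
qed

lemma Bset_card:
  assumes "finite Y" "C \<in> dbscan_clusters k Y e"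
  shows "k < card (Bset Y e C)"
proof -
  obtain c where c: "c \<in> C" using cluster_nonempty[OF assms(2)] by auto
  have cc: "c \<in> core_points k Y e" using cluster_subset_core[OF assms(2)] c by (rule subsetD)
  have k1: "k < card {y \<in> Y. dist c y \<le> e}" using cc unfolding core_points_def by simp
  have sub: "{y \<in> Y. dist c y \<le> e} \<subseteq> Bset Y e C"
  proof
    fix y assume "y \<in> {y \<in> Y. dist c y \<le> e}"
    then show "y \<in> Bset Y e C" using Bset_nbr[OF c] by simp
  qed
  have fin: "finite (Bset Y e C)" using assms(1) Bset_sub by (rule finite_subset[rotated])
  have "card {y \<in> Y. dist c y \<le> e} \<le> card (Bset Y e C)" by (rule card_mono[OF fin sub])
  then show ?thesis using k1 by linarith
qed

lemma core_dist_mono: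
  assumes "finite X" "B \<subseteq> X" "a \<in> B" "1 \<le> k" "k < card B"
  shows "core_dist k X a \<le> core_dist k B a"
proof -
  have fB: "finite B" using assms(1,2) finite_subset by blast
  have cB: "k \<le> card (B - {a})" using assms(3,5) fB by simp
  have cX: "k \<le> card (X - {a})"
    using cB card_mono[OF _ Diff_mono[OF assms(2), of "{a}" "{a}"]] assms(1) by fastforce
  let ?b = "core_dist k B a"
  have "k \<le> cnt B a ?b" using core_dist_le_iff[OF fB assms(4) cB, of ?b] by simp
  also have "\<dots> \<le> cnt X a ?b" by (rule cnt_mono_set[OF assms(2,1)])
  finally show ?thesis using core_dist_le_iff[OF assms(1,4) cX, of ?b] by simp
qed

lemma HInv:
  assumes "finite X" "snd (Hseq X k eps L) (a, b) = Some w"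
  shows "a \<noteq> b \<and> (\<exists>B. B \<subseteq> X \<and> a \<in> B \<and> b \<in> B \<and> k < card B \<and> w = rho k B a b)"
  using assms(2)
proof (induction L arbitrary: w)
  case 0 then show ?case by simp
next
  case (Suc m)
  let ?Y = "Xseq X k eps m" and ?e = "eps (Suc m)"
  let ?Gs = "(\<lambda>C. threshold (complete_wgraph (Bset ?Y ?e C) (rho k (Bset ?Y ?e C))) ?e)
                ` dbscan_clusters k ?Y ?e"
  have fY: "finite ?Y" using Xseq_finite[OF assms(1)] .
  from gunion_SomeD[OF Suc.prems[unfolded Hseq.simps]]
  consider "snd (gUnion ?Gs) (a, b) = Some w" | "snd (Hseq X k eps m) (a, b) = Some w" by blast
  then show ?case
  proof cases
    case 1
    have "finite ?Gs" using clusters_finite[OF fY] by simp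
    from gUnion_SomeD[OF this 1] obtain C where C: "C \<in> dbscan_clusters k ?Y ?e"
      and G: "snd (threshold (complete_wgraph (Bset ?Y ?e C) (rho k (Bset ?Y ?e C))) ?e) (a, b) = Some w"
      by blast
    from G have ab: "a \<in> Bset ?Y ?e C" "b \<in> Bset ?Y ?e C" "a \<noteq> b" "w = rho k (Bset ?Y ?e C) a b"
      by (auto simp: snd_threshold snd_complete split: if_splits)
    have "Bset ?Y ?e C \<subseteq> X" using Bset_sub Xseq_subset by blast
    then show ?thesis using ab Bset_card[OF fY C] by blast
  next
    case 2 then show ?thesis using Suc.IH by blast
  qed
qed

lemma part1:
  assumes "finite X" "1 \<le> k"
  shows "edges (threshold (Hseq X k eps i) a) \<subseteq> edges (threshold (complete_wgraph X (rho k X)) a)"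
proof
  fix e assume "e \<in> edges (threshold (Hseq X k eps i) a)"
  then obtain w where w: "snd (Hseq X k eps i) e = Some w" "w \<le> a" unfolding edges_threshold by auto
  obtain p q where e: "e = (p, q)" by (cases e)
  from HInv[OF assms(1) w(1)[unfolded e]] obtain B where
    B: "p \<noteq> q" "B \<subseteq> X" "p \<in> B" "q \<in> B" "k < card B" "w = rho k B p q" by blast
  have "core_dist k X p \<le> core_dist k B p" by (rule core_dist_mono[OF assms(1) B(2,3) assms(2) B(5)])
  moreover have "core_dist k X q \<le> core_dist k B q" by (rule core_dist_mono[OF assms(1) B(2,4) assms(2) B(5)])
  ultimately have "rho k X p q \<le> rho k B p q" unfolding rho_def using B(1) by auto
  then have "rho k X p q \<le> a" using w(2) B(6) by simp
  moreover have "p \<in> X" "q \<in> X" using B by auto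
  ultimately show "e \<in> edges (threshold (complete_wgraph X (rho k X)) a)"
    unfolding edges_threshold e using B(1) by (simp add: snd_complete)
qed


lemma T1:
  assumes fX: "finite X" and b0: "0 \<le> b" and be: "b \<le> eps (Suc m)"
    and ab: "a1 \<in> Xseq X k eps m" "a2 \<in> Xseq X k eps m" "a1 \<noteq> a2"
    and c1: "k \<le> cnt (Xseq X k eps m) a1 b" and c2: "k \<le> cnt (Xseq X k eps m) a2 b"
    and d: "dist a1 a2 \<le> b" and k1: "1 \<le> k"
  shows "(a1, a2) \<in> edges (threshold (Hseq X k eps (Suc m)) b)"
proof -
  let ?Y = "Xseq X k eps m" and ?e = "eps (Suc m)"
  have fY: "finite ?Y" using Xseq_finite[OF fX] .
  have e0: "0 \<le> ?e" using b0 be by simp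
  have "k \<le> cnt ?Y a1 ?e" using c1 cnt_mono_rad[OF be fY] le_trans by blast
  then have a1c: "a1 \<in> core_points k ?Y ?e" using core_points_iff[OF fY e0] ab(1) by blast
  have "k \<le> cnt ?Y a2 ?e" using c2 cnt_mono_rad[OF be fY] le_trans by blast
  then have a2c: "a2 \<in> core_points k ?Y ?e" using core_points_iff[OF fY e0] ab(2) by blast
  define C where "C = {q \<in> core_points k ?Y ?e. (a1, q) \<in> (core_rel k ?Y ?e)\<^sup>*}"
  have C: "C \<in> dbscan_clusters k ?Y ?e" "a1 \<in> C" using cluster_of_core[OF a1c] unfolding C_def by auto
  have a2C: "a2 \<in> C" using cluster_closed[OF C a2c] d be by simp
  define B where "B = Bset ?Y ?e C"
  have fB: "finite B" unfolding B_def using fY Bset_sub by (rule finite_subset[rotated])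
  have kB: "k < card B" unfolding B_def by (rule Bset_card[OF fY C(1)])
  have inB: "y \<in> B" if "y \<in> ?Y" "dist c y \<le> ?e" "c \<in> C" for y c
    unfolding B_def using Bset_nbr[OF that(3,1,2)] .
  have a1B: "a1 \<in> B" using inB[OF ab(1) _ C(2)] e0 by simp
  have a2B: "a2 \<in> B" using inB[OF ab(2) _ a2C] e0 by simp
  have cntB: "k \<le> cnt B x b" if "x \<in> C" "k \<le> cnt ?Y x b" for x
  proof -
    have "{z \<in> ?Y. z \<noteq> x \<and> dist x z \<le> b} \<subseteq> {z \<in> B. z \<noteq> x \<and> dist x z \<le> b}"
      using inB[OF _ _ that(1)] be by auto
    then have "cnt ?Y x b \<le> cnt B x b" unfolding cnt_def using fB by (intro card_mono) auto
    then show ?thesis using that(2) by simp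
  qed
  have cd1: "core_dist k B a1 \<le> b"
    using core_dist_le_iff[OF fB k1, of a1 b] cntB[OF C(2) c1] kB a1B by simp
  have cd2: "core_dist k B a2 \<le> b"
    using core_dist_le_iff[OF fB k1, of a2 b] cntB[OF a2C c2] kB a2B by simp
  have rb: "rho k B a1 a2 \<le> b" unfolding rho_def using cd1 cd2 d ab(3) by simp
  let ?G = "threshold (complete_wgraph B (rho k B)) ?e"
  let ?Gs = "(\<lambda>C. threshold (complete_wgraph (Bset ?Y ?e C) (rho k (Bset ?Y ?e C))) ?e)
                ` dbscan_clusters k ?Y ?e"
  have g1: "snd ?G (a1, a2) = Some (rho k B a1 a2)"
    using rb be a1B a2B ab(3) by (simp add: snd_threshold snd_complete)
  have g2: "?G \<in> ?Gs" unfolding B_def using C(1) by blast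
  have g3: "finite ?Gs" using clusters_finite[OF fY] by simp
  obtain w1 where w1: "w1 \<le> rho k B a1 a2" "snd (gUnion ?Gs) (a1, a2) = Some w1"
    using gUnion_le[OF g3 g2 g1] by blast
  obtain w where w: "w \<le> w1" "snd (gunion (gUnion ?Gs) (Hseq X k eps m)) (a1, a2) = Some w"
    using gunion_le1[OF w1(2), of "Hseq X k eps m"] by blast
  have "snd (Hseq X k eps (Suc m)) (a1, a2) = snd (gunion (gUnion ?Gs) (Hseq X k eps m)) (a1, a2)"
    by (simp only: Hseq.simps)
  then have "w \<le> w1 \<and> snd (Hseq X k eps (Suc m)) (a1, a2) = Some w" using w by simp
  then show ?thesis unfolding edges_threshold using w1(1) rb by auto
qed

lemma T3:
  assumes fX: "finite X" and k1: "1 \<le> k" and C: "C \<in> dbscan_clusters k (Xseq X k eps m) (eps (Suc m))"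
    and L: "Suc m \<le> L" and ea: "eps (Suc m) \<le> a" and e0: "0 \<le> eps (Suc m)"
    and c: "c \<in> C" "c' \<in> C"
  shows "(c, c') \<in> (edges (threshold (Hseq X k eps L) a))\<^sup>*"
proof -
  let ?Y = "Xseq X k eps m" and ?e = "eps (Suc m)"
  have fY: "finite ?Y" using Xseq_finite[OF fX] .
  have "core_rel k ?Y ?e \<subseteq> edges (threshold (Hseq X k eps L) a)"
  proof
    fix pr assume pr: "pr \<in> core_rel k ?Y ?e"
    obtain x y where xy: "pr = (x, y)" by (cases pr)
    have h: "x \<in> core_points k ?Y ?e" "y \<in> core_points k ?Y ?e" "x \<noteq> y" "dist x y \<le> ?e"
      using pr unfolding xy core_rel_def by auto
    have hx: "x \<in> ?Y" "k \<le> cnt ?Y x ?e" using h(1) core_points_iff[OF fY e0] by auto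
    have hy: "y \<in> ?Y" "k \<le> cnt ?Y y ?e" using h(2) core_points_iff[OF fY e0] by auto
    have "(x, y) \<in> edges (threshold (Hseq X k eps (Suc m)) ?e)"
      by (rule T1[OF fX e0 order_refl hx(1) hy(1) h(3) hx(2) hy(2) h(4) k1])
    then show "pr \<in> edges (threshold (Hseq X k eps L) a)"
      using edges_mono[OF L ea] unfolding xy by blast
  qed
  then have "(core_rel k ?Y ?e)\<^sup>* \<subseteq> (edges (threshold (Hseq X k eps L) a))\<^sup>*" by (rule rtrancl_mono)
  then show ?thesis using cluster_conn[OF C c] by blast
qed


lemma removal_level:
  assumes "p \<in> Xseq X k eps a" "p \<notin> Xseq X k eps b" "a \<le> b"
  shows "\<exists>m. a \<le> m \<and> m < b \<and> p \<in> Xseq X k eps m \<and> p \<notin> Xseq X k eps (Suc m)"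
proof -
  let ?P = "\<lambda>l. p \<in> Xseq X k eps (a + l)"
  have "?P 0" using assms(1) by simp
  moreover have "\<not> ?P (b - a)" using assms(2,3) by simp
  ultimately obtain l where "l < b - a" "?P l" "\<not> ?P (Suc l)" using discrete_switch[of ?P] by blast
  then show ?thesis by (intro exI[of _ "a + l"]) auto
qed

lemma removed_deep:
  fixes X :: "(real^'n::finite) set"
  assumes "p \<in> Xseq X k eps m" "p \<notin> Xseq X k eps (Suc m)"
  shows "\<exists>C \<in> dbscan_clusters k (Xseq X k eps m) (eps (Suc m)). deep X (eps (Suc m)) C p"
  using not_in_Fset(1)[of p "Xseq X k eps m" X k "eps (Suc m)"] assms unfolding deep_def by auto

lemma cluster_sub_X: "C \<in> dbscan_clusters k (Xseq X k eps m) e \<Longrightarrow> C \<subseteq> X"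
  using cluster_subset_core core_subset Xseq_subset by blast

lemma cluster_cnt:
  assumes "finite X" "C \<in> dbscan_clusters k (Xseq X k eps m) e" "c \<in> C" "0 \<le> e" "e \<le> a"
  shows "k \<le> cnt X c a"
proof -
  have fY: "finite (Xseq X k eps m)" using Xseq_finite[OF assms(1)] .
  have "c \<in> core_points k (Xseq X k eps m) e" using cluster_subset_core[OF assms(2)] assms(3) by blast
  then have "k \<le> cnt (Xseq X k eps m) c e" using core_points_iff[OF fY assms(4)] by blast
  also have "\<dots> \<le> cnt X c e" by (rule cnt_mono_set[OF Xseq_subset assms(1)])
  also have "\<dots> \<le> cnt X c a" by (rule cnt_mono_rad[OF assms(5,1)])
  finally show ?thesis .
qed

locale setting =
  fixes X :: "(real^'n::finite) set" and k :: nat and eps :: "nat \<Rightarrow> real"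
    and i :: nat and al :: real
  assumes n2: "CARD('n) \<ge> 2"
    and fX: "finite X"
    and k1: "1 \<le> k" and kX: "k < card X"
    and eps0: "eps 0 = 0" and smono: "strict_mono eps"
    and i1: "1 \<le> i"
    and al1: "eps (i - 1) < al" and al2: "al \<le> eps i"
begin

abbreviation "Z m \<equiv> Xseq X k eps m"
abbreviation "E \<equiv> edges (threshold (Hseq X k eps i) al)"
definition "GP p q \<longleftrightarrow> p \<in> X \<and> q \<in> X \<and> p \<noteq> q \<and> k \<le> cnt X p al \<and> k \<le> cnt X q al \<and> dist p q \<le> al"

lemma GP_sym: "GP p q \<Longrightarrow> GP q p"
  unfolding GP_def by (auto simp: dist_commute)

lemma eps_pos: "0 < eps (Suc m)"
  using smono eps0 by (metis strict_mono_def zero_less_Suc)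

lemma eps_le_al: "Suc m \<le> i - 1 \<Longrightarrow> eps (Suc m) \<le> al"
proof -
  assume "Suc m \<le> i - 1"
  then have "eps (Suc m) \<le> eps (i - 1)" using smono by (simp add: strict_mono_less_eq)
  then show ?thesis using al1 by simp
qed

lemma finish:
  assumes IH: "\<And>c. GP c q \<Longrightarrow> dist c q < dist p q \<Longrightarrow> (c, q) \<in> E\<^sup>*"
    and gp: "GP p q" and m: "Suc m \<le> i - 1"
    and C: "C \<in> dbscan_clusters k (Z m) (eps (Suc m))"
    and dp: "deep X (eps (Suc m)) C r" and pC: "p \<in> C"
    and dr: "dist r q \<le> dist p q + eps (Suc m)"
  shows "(p, q) \<in> E\<^sup>*"
proof -
  let ?e = "eps (Suc m)"
  have e: "0 < ?e" by (rule eps_pos)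
  have ea: "?e \<le> al" using eps_le_al[OF m] .
  have L: "Suc m \<le> i" using m by simp
  show ?thesis
  proof (cases "q \<in> C")
    case True
    then show ?thesis using T3[OF fX k1 C L ea less_imp_le[OF e] pC] by blast
  next
    case False
    have qX: "q \<in> X" using gp unfolding GP_def by simp
    obtain c where c: "c \<in> C" "dist c q < dist r q - ?e" using deep_closer[OF n2 e dp qX False] by blast
    have cq: "dist c q < dist p q" using c(2) dr by simp
    have "GP c q" unfolding GP_def
    proof (intro conjI)
      show "c \<in> X" using cluster_sub_X[OF C] c(1) by blast
      show "q \<in> X" by (rule qX)
      show "c \<noteq> q" using c(1) False by blast
      show "k \<le> cnt X c al" using cluster_cnt[OF fX C c(1) less_imp_le[OF e] ea] .
      show "k \<le> cnt X q al" using gp unfolding GP_def by simp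
      show "dist c q \<le> al" using cq gp unfolding GP_def by simp
    qed
    then have "(c, q) \<in> E\<^sup>*" using IH cq by blast
    moreover have "(p, c) \<in> E\<^sup>*" using T3[OF fX k1 C L ea less_imp_le[OF e] pC c(1)] .
    ultimately show ?thesis by (rule rtrancl_trans[rotated])
  qed
qed

lemma step:
  assumes IH: "\<And>c. GP c q \<Longrightarrow> dist c q < dist p q \<Longrightarrow> (c, q) \<in> E\<^sup>*"
    and gp: "GP p q" and bad: "p \<notin> Z (i - 1) \<or> cnt (Z (i - 1)) p al < k"
  shows "(p, q) \<in> E\<^sup>*"
proof -
  have pX: "p \<in> X" and qX: "q \<in> X" and cX: "k \<le> cnt X p al" using gp unfolding GP_def by auto
  have fZ: "finite (Z m)" for m using Xseq_finite[OF fX] .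
  show ?thesis
  proof (cases "p \<in> Z (i - 1)")
    case False
    obtain m where m: "m < i - 1" "p \<in> Z m" "p \<notin> Z (Suc m)"
      using removal_level[of p X k eps 0 "i - 1"] pX False by auto
    obtain C where C: "C \<in> dbscan_clusters k (Z m) (eps (Suc m))" "deep X (eps (Suc m)) C p"
      using removed_deep[OF m(2,3)] by blast
    have "p \<in> C" using C(2) unfolding deep_def by simp
    then show ?thesis using finish[OF IH gp _ C(1) C(2)] m(1) eps_pos[of m] by simp
  next
    case True
    then have low: "cnt (Z (i - 1)) p al < k" using bad by simp
    let ?S = "{z \<in> X. z \<noteq> p \<and> dist p z \<le> al}"
    have "\<exists>r. r \<in> X \<and> r \<noteq> p \<and> dist p r \<le> al \<and> r \<notin> Z (i - 1)"
    proof (rule ccontr)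
      assume "\<not> ?thesis"
      then have "?S \<subseteq> {z \<in> Z (i - 1). z \<noteq> p \<and> dist p z \<le> al}" by auto
      then have "card ?S \<le> cnt (Z (i - 1)) p al" unfolding cnt_def using fZ by (intro card_mono) auto
      then show False using low cX unfolding cnt_def by simp
    qed
    then obtain r where r: "r \<in> X" "r \<noteq> p" "dist p r \<le> al" "r \<notin> Z (i - 1)" by blast
    define Ms where "Ms = {m. m < i - 1 \<and> (\<exists>r. r \<in> X \<and> r \<noteq> p \<and> dist p r \<le> al \<and> r \<in> Z m \<and> r \<notin> Z (Suc m))}"
    have finMs: "finite Ms" unfolding Ms_def by simp
    obtain m1 where "m1 < i - 1" "r \<in> Z m1" "r \<notin> Z (Suc m1)"
      using removal_level[of r X k eps 0 "i - 1"] r by auto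
    then have "m1 \<in> Ms" unfolding Ms_def using r by blast
    then have neMs: "Ms \<noteq> {}" by blast
    define m0 where "m0 = Max Ms"
    have m0Ms: "m0 \<in> Ms" unfolding m0_def using finMs neMs by (rule Max_in)
    have m0max: "m' \<le> m0" if "m' \<in> Ms" for m' unfolding m0_def using finMs that by simp
    obtain r0 where r0: "m0 < i - 1" "r0 \<in> X" "r0 \<noteq> p" "dist p r0 \<le> al" "r0 \<in> Z m0" "r0 \<notin> Z (Suc m0)"
      using m0Ms unfolding Ms_def by blast
    have m0i: "Suc m0 \<le> i - 1" using r0(1) by simp
    let ?e = "eps (Suc m0)"
    have e: "0 < ?e" by (rule eps_pos)
    have ea: "?e \<le> al" using eps_le_al[OF m0i] .
    have claimA: "y \<in> Z (i - 1)" if yy: "y \<in> Z (Suc m0)" "y \<noteq> p" "dist p y \<le> al" for y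
    proof (rule ccontr)
      assume "y \<notin> Z (i - 1)"
      then obtain m' where m': "Suc m0 \<le> m'" "m' < i - 1" "y \<in> Z m'" "y \<notin> Z (Suc m')"
        using removal_level[OF yy(1) _ m0i] by blast
      have "y \<in> X" using yy(1) Xseq_subset by blast
      then have "m' \<in> Ms" unfolding Ms_def using m' yy by blast
      then show False using m0max m'(1) by fastforce
    qed
    have lowA: "cnt (Z (Suc m0)) p al < k"
    proof -
      have "{z \<in> Z (Suc m0). z \<noteq> p \<and> dist p z \<le> al} \<subseteq> {z \<in> Z (i - 1). z \<noteq> p \<and> dist p z \<le> al}"
        using claimA by blast
      then have "cnt (Z (Suc m0)) p al \<le> cnt (Z (i - 1)) p al" unfolding cnt_def using fZ by (intro card_mono) auto
      then show ?thesis using low by simp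
    qed
    obtain C where C: "C \<in> dbscan_clusters k (Z m0) ?e" "deep X ?e C r0"
      using removed_deep[OF r0(5,6)] by blast
    have pC: "p \<in> C"
    proof (rule ccontr)
      assume pC: "p \<notin> C"
      obtain c j where c: "c \<in> C" "c \<in> cube ?e j" "\<not> interior_cube X ?e C (cube ?e j)" "dist p c \<le> dist p r0 - ?e"
        using walk[OF n2 e C(2) pX pC] by blast
      define W where "W = {w \<in> Z m0. dist c w \<le> ?e}"
      have "c \<in> core_points k (Z m0) ?e" using cluster_subset_core[OF C(1)] c(1) by blast
      then have kW: "k < card W" unfolding W_def core_points_def by simp
      have fW: "finite W" unfolding W_def using fZ by simp
      have "W - {p} \<subseteq> {z \<in> Z (Suc m0). z \<noteq> p \<and> dist p z \<le> al}"
      proof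
        fix w assume w: "w \<in> W - {p}"
        then have wY: "w \<in> Z m0" and dw: "dist c w \<le> ?e" unfolding W_def by auto
        have "w \<in> Z (Suc m0)"
          using retained[OF fZ e C(1) c(1,2,3) wY dw] by simp
        moreover have "dist p w \<le> al"
          using dist_triangle[of p w c] dw c(4) r0(4) by linarith
        ultimately show "w \<in> {z \<in> Z (Suc m0). z \<noteq> p \<and> dist p z \<le> al}" using w by blast
      qed
      then have "card (W - {p}) \<le> cnt (Z (Suc m0)) p al" unfolding cnt_def using fZ[of "Suc m0"] by (intro card_mono) auto
      moreover have "card W \<le> card (W - {p}) + 1"
        using fW by (metis card_Diff1_le card_Diff_singleton_if card.remove Suc_eq_plus1 le_refl order_refl
             card_Diff_singleton add.commute le_add2)
      ultimately show False using kW lowA by linarith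
    qed
    have "p \<in> core_points k (Z m0) ?e" using cluster_subset_core[OF C(1)] pC by blast
    then have kp: "k \<le> cnt (Z m0) p ?e" using core_points_iff[OF fZ less_imp_le[OF e]] by blast
    have "\<exists>r'. r' \<in> Z m0 \<and> r' \<noteq> p \<and> dist p r' \<le> ?e \<and> r' \<notin> Z (Suc m0)"
    proof (rule ccontr)
      assume "\<not> ?thesis"
      then have "{z \<in> Z m0. z \<noteq> p \<and> dist p z \<le> ?e} \<subseteq> {z \<in> Z (Suc m0). z \<noteq> p \<and> dist p z \<le> al}"
        using ea by auto
      then have "cnt (Z m0) p ?e \<le> cnt (Z (Suc m0)) p al" unfolding cnt_def using fZ[of "Suc m0"] by (intro card_mono) auto
      then show False using kp lowA by simp
    qed
    then obtain r' where r': "r' \<in> Z m0" "r' \<noteq> p" "dist p r' \<le> ?e" "r' \<notin> Z (Suc m0)" by blast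
    obtain C' where C': "C' \<in> dbscan_clusters k (Z m0) ?e" "deep X ?e C' r'"
      using removed_deep[OF r'(1,4)] by blast
    have pC': "p \<in> C'"
    proof (rule deep_a[OF e C'(2) pX])
      fix l
      have "\<bar>p$l - r'$l\<bar> \<le> ?e" using comp_le_dist[of p l r'] r'(3) by simp
      moreover have "?e \<le> real (frakN TYPE('n)) * side ?e TYPE('n)" by (rule N_side[OF e])
      moreover have "0 \<le> side ?e TYPE('n)" using side_pos[OF e, where 'n='n] by simp
      ultimately show "\<bar>p$l - r'$l\<bar> \<le> (real (frakN TYPE('n)) + 1) * side ?e TYPE('n)"
        by (simp add: algebra_simps)
    qed
    have "dist r' q \<le> dist p q + ?e" using dist_triangle[of r' q p] r'(3) by (simp add: dist_commute)
    then show ?thesis using finish[OF IH gp m0i C'(1) C'(2) pC'] by simp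
  qed
qed

lemma main_pairs: "GP p q \<Longrightarrow> (p, q) \<in> E\<^sup>*"
proof -
  define mes where "mes a b = card {(x, y) \<in> X \<times> X. dist x y < dist a b}" for a b :: "real^'n"
  have mes_less: "mes c d < mes a b" if "c \<in> X" "d \<in> X" "dist c d < dist a b" for a b c d
  proof -
    have "{(x, y) \<in> X \<times> X. dist x y < dist c d} \<subset> {(x, y) \<in> X \<times> X. dist x y < dist a b}"
      using that by auto
    moreover have "finite {(x, y) \<in> X \<times> X. dist x y < dist a b}"
    proof (rule finite_subset)
      show "{(x, y) \<in> X \<times> X. dist x y < dist a b} \<subseteq> X \<times> X" by auto
      show "finite (X \<times> X)" using fX by simp
    qed
    ultimately show ?thesis unfolding mes_def by (intro psubset_card_mono)
  qed
  have mes_sym: "mes a b = mes b a" for a b unfolding mes_def by (simp add: dist_commute)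
  have "\<forall>p q. mes p q = n \<longrightarrow> GP p q \<longrightarrow> (p, q) \<in> E\<^sup>*" for n
  proof (induction n rule: less_induct)
    case (less n)
    show ?case
    proof (intro allI impI)
      fix p q assume mn: "mes p q = n" and gp: "GP p q"
      have IH: "(c, d) \<in> E\<^sup>*" if "GP c d" "dist c d < dist p q" for c d
      proof -
        have "c \<in> X" "d \<in> X" using that(1) unfolding GP_def by auto
        then have "mes c d < n" using mes_less that(2) mn by blast
        then show ?thesis using less.IH that(1) by blast
      qed
      show "(p, q) \<in> E\<^sup>*"
      proof (cases "p \<notin> Z (i - 1) \<or> cnt (Z (i - 1)) p al < k")
        case True
        show ?thesis by (rule step[OF _ gp True]) (rule IH)
      next
        case F1: False
        show ?thesis
        proof (cases "q \<notin> Z (i - 1) \<or> cnt (Z (i - 1)) q al < k")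
          case True
          have "(q, p) \<in> E\<^sup>*"
          proof (rule step[OF _ GP_sym[OF gp] True])
            fix c assume "GP c p" "dist c p < dist q p"
            then show "(c, p) \<in> E\<^sup>*" using IH by (simp add: dist_commute)
          qed
          then show ?thesis by (rule edges_rtrancl_sym)
        next
          case F2: False
          have ii: "Suc (i - 1) = i" using i1 by simp
          have "eps 0 \<le> eps (i - 1)" using smono by (simp add: strict_mono_less_eq)
          then have a0: "0 \<le> al" using al1 eps0 by linarith
          have "(p, q) \<in> edges (threshold (Hseq X k eps (Suc (i - 1))) al)"
          proof (rule T1[OF fX a0])
            show "al \<le> eps (Suc (i - 1))" using al2 ii by simp
            show "p \<in> Z (i - 1)" "q \<in> Z (i - 1)" using F1 F2 by auto
            show "p \<noteq> q" "dist p q \<le> al" using gp unfolding GP_def by auto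
            show "k \<le> cnt (Z (i - 1)) p al" "k \<le> cnt (Z (i - 1)) q al" using F1 F2 by auto
            show "1 \<le> k" by (rule k1)
          qed
          then show ?thesis using ii by simp
        qed
      qed
    qed
  qed
  then show "GP p q \<Longrightarrow> (p, q) \<in> E\<^sup>*" by blast
qed

end


theorem lemma5p8:
  fixes X :: "(real^'n::finite) set" and k :: nat and eps :: "nat \<Rightarrow> real"
    and i :: nat and \<alpha> :: real
  assumes "CARD('n) \<ge> 2"
    and "finite X"
    and "1 \<le> k" and "k < card X"
    and "eps 0 = 0" and "strict_mono eps"
    and "1 \<le> i"
    and "eps (i - 1) < \<alpha>" and "\<alpha> \<le> eps i"
  shows "edges (threshold (Hseq X k eps i) \<alpha>)
           \<subseteq> edges (threshold (complete_wgraph X (rho k X)) \<alpha>)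
         \<and> (\<forall>(p, q) \<in> edges (threshold (complete_wgraph X (rho k X)) \<alpha>).
           (p, q) \<in> (edges (threshold (Hseq X k eps i) \<alpha>))\<^sup>*)"
proof
  interpret S: setting X k eps i \<alpha> using assms by unfold_locales
  show "edges (threshold (Hseq X k eps i) \<alpha>) \<subseteq> edges (threshold (complete_wgraph X (rho k X)) \<alpha>)"
    by (rule part1[OF assms(2,3)])
  show "\<forall>(p, q) \<in> edges (threshold (complete_wgraph X (rho k X)) \<alpha>).
           (p, q) \<in> (edges (threshold (Hseq X k eps i) \<alpha>))\<^sup>*"
  proof (intro ballI, clarify)
    fix p q assume "(p, q) \<in> edges (threshold (complete_wgraph X (rho k X)) \<alpha>)"
    then have h: "p \<in> X" "q \<in> X" "p \<noteq> q" "rho k X p q \<le> \<alpha>"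
      unfolding edges_threshold by (auto simp: snd_complete split: if_splits)
    have cp: "k \<le> card (X - {p})" and cq: "k \<le> card (X - {q})" using assms(4) assms(2) h(1,2) by auto
    have r: "core_dist k X p \<le> \<alpha>" "core_dist k X q \<le> \<alpha>" "dist p q \<le> \<alpha>"
      using h(3,4) unfolding rho_def by auto
    have "S.GP p q" unfolding S.GP_def
      using h(1-3) r(3) core_dist_le_iff[OF assms(2,3) cp, of \<alpha>] core_dist_le_iff[OF assms(2,3) cq, of \<alpha>] r(1,2)
      by simp
    then show "(p, q) \<in> (edges (threshold (Hseq X k eps i) \<alpha>))\<^sup>*" by (rule S.main_pairs)
  qed
qed

end
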